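(* Let $n=p^2$ where $p$ is prime. Let $\mathcal{C}$ be the code obtained from $\mathcal{C}(r=p,p,S=\{0,1,2,3,4\})$ by appending one global parity bit equal to the sum modulo 2 of all $n$ information bits. Then $\mathcal{C}$ is a binary $5$-batch code of dimension $n$ with redundancy $5p+1=\Theta(\sqrt n)$, and therefore $r_B(n,5)=\Theta(\sqrt n)$.
   Context: Array construction: for positive integers $r,p$ with $n=rp$ and $S=\{s_0<\dots<s_{k-1}\}\subseteq\{0,\dots,p-1\}$, let $D_{s,t}=\{(i,\langle t+is\rangle_p): i=0,\dots,r-1\}$ for $s,t\in\{0,\dots,p-1\}$, where $\langle x\rangle_p=x\bmod p$. An information vector $\boldsymbol{x}\in\{0,1\}^n$ is written as an array $(x_{i,j})$, $(i,j)\in\{0,\dots,r-1\}\times\{0,\dots,p-1\}$, and redundancy bits $\rho_{\ell,t}=\sum_{(i,j)\in D_{s_\ell,t}}x_{i,j}\pmod2$ are added for $\ell\in\{0,\dots,k-1\}$, $t\in\{0,\dots,p-1\}$; $\mathcal{C}(r,p,S)$ is the binary code of all words $(\boldsymbol{x},(\rho_{\ell,t}))$. A binary linear code of length $N$ encoding $n$ information bits is a $k$-batch code if for every multiset $\{i_1,\dots,i_k\}$ of information indices there exist $k$ mutually disjoint sets $R_1,\dots,R_k$ of coordinates such that $x_{i_j}$ is a function of the codeword bits indexed by $R_j$; its redundancy is $N-n$, and $r_B(n,k)$ is the minimum redundancy of a binary $k$-batch code of dimension $n$. *)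

theory Defs
  imports Complex_Main "HOL-Library.Z2" "HOL-Computational_Algebra.Primes"
begin

definition words :: "nat \<Rightarrow> (nat \<Rightarrow> bit) set" where
  "words m = {x. \<forall>i\<ge>m. x i = 0}"

definition linear_code :: "nat \<Rightarrow> nat \<Rightarrow> ((nat \<Rightarrow> bit) \<Rightarrow> (nat \<Rightarrow> bit)) \<Rightarrow> bool" where
  "linear_code n N E \<longleftrightarrow>
     (\<forall>x\<in>words n. E x \<in> words N) \<and>
     (\<forall>x\<in>words n. \<forall>y\<in>words n. E (\<lambda>i. x i + y i) = (\<lambda>c. E x c + E y c)) \<and>
     inj_on E (words n)"

definition recovers :: "nat \<Rightarrow> ((nat \<Rightarrow> bit) \<Rightarrow> (nat \<Rightarrow> bit)) \<Rightarrow> nat set \<Rightarrow> nat \<Rightarrow> bool" where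
  "recovers n E R i \<longleftrightarrow>
     (\<forall>x\<in>words n. \<forall>y\<in>words n. (\<forall>c\<in>R. E x c = E y c) \<longrightarrow> x i = y i)"

(* k-batch code: every request i_1,...,i_k (a list of length k, possibly with
   repetitions, i.e. any multiset in any order) admits k mutually disjoint
   recovering sets of coordinates. *)
definition batch_code :: "nat \<Rightarrow> nat \<Rightarrow> nat \<Rightarrow> ((nat \<Rightarrow> bit) \<Rightarrow> (nat \<Rightarrow> bit)) \<Rightarrow> bool" where
  "batch_code n N k E \<longleftrightarrow> linear_code n N E \<and>
     (\<forall>is. length is = k \<and> set is \<subseteq> {..<n} \<longrightarrow>
        (\<exists>R :: nat \<Rightarrow> nat set.
            (\<forall>j<k. R j \<subseteq> {..<N}) \<and>
            (\<forall>j<k. \<forall>j'<k. j \<noteq> j' \<longrightarrow> R j \<inter> R j' = {}) \<and>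
            (\<forall>j<k. recovers n E (R j) (is ! j))))"

definition r_B :: "nat \<Rightarrow> nat \<Rightarrow> nat" where
  "r_B n k = (LEAST r. \<exists>N E. n \<le> N \<and> N - n = r \<and> batch_code n N k E)"

definition D :: "nat \<Rightarrow> nat \<Rightarrow> nat \<Rightarrow> nat \<Rightarrow> (nat \<times> nat) set" where
  "D r p s t = {(i, (t + i * s) mod p) | i. i < r}"

(* Information bit x_{i,j} sits at coordinate i*p + j (0 <= i < r, 0 <= j < p);
   redundancy bit rho_{l,t} sits at coordinate r*p + l*p + t. *)
definition array_code :: "nat \<Rightarrow> nat \<Rightarrow> nat list \<Rightarrow> (nat \<Rightarrow> bit) \<Rightarrow> (nat \<Rightarrow> bit)" where
  "array_code r p S x c =
     (if c < r * p then x c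
      else if c < r * p + length S * p then
        (let l = (c - r * p) div p; t = (c - r * p) mod p in
           \<Sum>(i, j)\<in>D r p (S ! l) t. x (i * p + j))
      else 0)"

definition array_code_parity :: "nat \<Rightarrow> nat \<Rightarrow> nat list \<Rightarrow> (nat \<Rightarrow> bit) \<Rightarrow> (nat \<Rightarrow> bit)" where
  "array_code_parity r p S x c =
     (if c = r * p + length S * p then (\<Sum>a<r * p. x a) else array_code r p S x c)"

end

theory Submission
  imports Defs
begin

lemma bit_cases2: "(a::bit) = 0 \<or> a = 1" using bit_not_zero_iff by blast

lemma bit_add_self [simp]: "(a::bit) + a = 0" by simp

lemma bit_add_self2 [simp]: "(a::bit) + (a + b) = b"
  by (metis add.assoc bit_add_self add_0)

declare add_bit_eq_xor[simp del] mult_bit_eq_and[simp del]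

lemma bit_add_eq0: "(a::bit) + b = 0 \<Longrightarrow> a = b"
  using bit_cases2[of a] bit_cases2[of b] by auto

lemma bit_neq: "(a::bit) \<noteq> b \<Longrightarrow> a + b = 1"
  using bit_cases2[of a] bit_cases2[of b] by auto

lemma bit_maj:
  fixes z y1 y2 y3 :: bit
  assumes "\<not>(u1 \<and> u2)" "\<not>(u1 \<and> u3)" "\<not>(u2 \<and> u3)"
    "z = (if u1 then 1 else 0) + y1" "z = (if u2 then 1 else 0) + y2" "z = (if u3 then 1 else 0) + y3"
  shows "z = y1 * y2 + y1 * y3 + y2 * y3"
  using assms bit_cases2[of y1] bit_cases2[of y2] bit_cases2[of y3]
  by (cases u1; cases u2; cases u3) auto

lemma sum_bit_symdiff:
  fixes f :: "'a \<Rightarrow> bit"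
  assumes "finite I" "finite J"
  shows "(\<Sum>i\<in>(I - J) \<union> (J - I). f i) = (\<Sum>i\<in>I. f i) + (\<Sum>i\<in>J. f i)"
proof -
  have "(\<Sum>i\<in>I. f i) = (\<Sum>i\<in>I - J. f i) + (\<Sum>i\<in>I \<inter> J. f i)"
  proof -
    have "I - I \<inter> J = I - J" by blast
    thus ?thesis using sum.subset_diff[of "I \<inter> J" I f, OF Int_lower1 assms(1)] by simp
  qed
  moreover have "(\<Sum>i\<in>J. f i) = (\<Sum>i\<in>J - I. f i) + (\<Sum>i\<in>I \<inter> J. f i)"
  proof -
    have "J - I \<inter> J = J - I" by blast
    thus ?thesis using sum.subset_diff[of "I \<inter> J" J f, OF Int_lower2 assms(2)] by simp
  qed
  moreover have "(\<Sum>i\<in>(I - J) \<union> (J - I). f i) = (\<Sum>i\<in>I - J. f i) + (\<Sum>i\<in>J - I. f i)"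
    using assms by (intro sum.union_disjoint) auto
  ultimately show ?thesis by (simp add: algebra_simps)
qed

lemma words_add: "x \<in> words n \<Longrightarrow> y \<in> words n \<Longrightarrow> (\<lambda>i. x i + y i) \<in> words n"
  by (simp add: words_def)

lemma words_zero: "(\<lambda>_. 0) \<in> words n"
  by (simp add: words_def)

lemma words_sum: "(\<forall>k\<in>K. w k \<in> words n) \<Longrightarrow> (\<lambda>i. \<Sum>k\<in>K. w k i) \<in> words n"
  by (simp add: words_def)

lemma card_supp:
  assumes "finite A"
  shows "card {f::nat\<Rightarrow>bit. \<forall>a. a \<notin> A \<longrightarrow> f a = 0} = 2 ^ card A"
    and "finite {f::nat\<Rightarrow>bit. \<forall>a. a \<notin> A \<longrightarrow> f a = 0}"
proof -
  define g :: "nat set \<Rightarrow> nat \<Rightarrow> bit" where "g = (\<lambda>S. \<lambda>a. if a \<in> S then 1 else 0)"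
  have b: "bij_betw g (Pow A) {f::nat\<Rightarrow>bit. \<forall>a. a \<notin> A \<longrightarrow> f a = 0}"
  proof (rule bij_betwI')
    fix S T assume "S \<in> Pow A" "T \<in> Pow A"
    show "(g S = g T) = (S = T)"
    proof
      assume h: "g S = g T"
      show "S = T"
      proof (rule set_eqI)
        fix a from fun_cong[OF h, of a] show "a \<in> S \<longleftrightarrow> a \<in> T"
          unfolding g_def by (cases "a \<in> S"; cases "a \<in> T") simp_all
      qed
    qed simp
  next
    fix S assume "S \<in> Pow A" thus "g S \<in> {f. \<forall>a. a \<notin> A \<longrightarrow> f a = 0}"
      unfolding g_def by auto
  next
    fix f assume f: "f \<in> {f::nat\<Rightarrow>bit. \<forall>a. a \<notin> A \<longrightarrow> f a = 0}"
    have "f = g {a\<in>A. f a = 1}"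
    proof
      fix a show "f a = g {a\<in>A. f a = 1} a"
        using f bit_cases2[of "f a"] unfolding g_def by (cases "a \<in> A") auto
    qed
    moreover have "{a\<in>A. f a = 1} \<in> Pow A" by blast
    ultimately show "\<exists>S\<in>Pow A. f = g S" by blast
  qed
  show "card {f::nat\<Rightarrow>bit. \<forall>a. a \<notin> A \<longrightarrow> f a = 0} = 2 ^ card A"
    using bij_betw_same_card[OF b] card_Pow[of A] assms by simp
  show "finite {f::nat\<Rightarrow>bit. \<forall>a. a \<notin> A \<longrightarrow> f a = 0}"
    using bij_betw_finite[OF b] assms by simp
qed

lemma words_eq: "words n = {f::nat\<Rightarrow>bit. \<forall>a. a \<notin> {..<n} \<longrightarrow> f a = 0}"
  by (auto simp: words_def)

context
  fixes n N :: nat and E :: "(nat \<Rightarrow> bit) \<Rightarrow> (nat \<Rightarrow> bit)"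
  assumes lc: "linear_code n N E"
begin

lemma E_add: "x \<in> words n \<Longrightarrow> y \<in> words n \<Longrightarrow> E (\<lambda>i. x i + y i) = (\<lambda>c. E x c + E y c)"
  using lc unfolding linear_code_def by blast

lemma E_zero: "E (\<lambda>_. 0) = (\<lambda>_. 0)"
proof -
  have "E (\<lambda>i. (0::bit) + 0) = (\<lambda>c. E (\<lambda>_. 0) c + E (\<lambda>_. 0) c)"
    using E_add words_zero by blast
  thus ?thesis by simp
qed

lemma E_sum:
  assumes "finite K" "\<forall>k\<in>K. w k \<in> words n"
  shows "E (\<lambda>i. \<Sum>k\<in>K. w k i) = (\<lambda>c. \<Sum>k\<in>K. E (w k) c)"
  using assms
proof (induction K rule: finite_induct)
  case empty
  then show ?case using E_zero by simp
next
  case (insert k K)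
  have "E (\<lambda>i. \<Sum>k\<in>insert k K. w k i) = E (\<lambda>i. w k i + (\<Sum>k\<in>K. w k i))"
    using insert by simp
  also have "\<dots> = (\<lambda>c. E (w k) c + E (\<lambda>i. \<Sum>k\<in>K. w k i) c)"
    using E_add[of "w k" "\<lambda>i. \<Sum>k\<in>K. w k i"] insert words_sum[of K w n] by simp
  also have "\<dots> = (\<lambda>c. \<Sum>k\<in>insert k K. E (w k) c)"
    using insert by simp
  finally show ?case .
qed

lemma rec_lin:
  assumes "finite R" "recovers n E R i"
  shows "\<exists>F\<subseteq>R. \<forall>x\<in>words n. x i = (\<Sum>c\<in>F. E x c)"
  using assms
proof (induction "card R" arbitrary: R rule: less_induct)
  case less
  show ?case
  proof (cases "\<exists>c\<in>R. recovers n E (R - {c}) i")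
    case True
    then obtain c where c: "c\<in>R" "recovers n E (R-{c}) i" by blast
    have "card (R-{c}) < card R" using card_Diff1_less[OF less.prems(1) c(1)] .
    moreover have "finite (R - {c})" using less.prems(1) by blast
    ultimately have "\<exists>F\<subseteq>R-{c}. \<forall>x\<in>words n. x i = (\<Sum>c\<in>F. E x c)"
      using less.hyps c(2) by blast
    then obtain F where "F \<subseteq> R-{c}" "\<forall>x\<in>words n. x i = (\<Sum>c\<in>F. E x c)" by blast
    hence "F \<subseteq> R" "\<forall>x\<in>words n. x i = (\<Sum>c\<in>F. E x c)" by auto
    thus ?thesis by blast
  next
    case False
    have w: "\<forall>c\<in>R. \<exists>w. w\<in>words n \<and> w i = 1 \<and> E w c = 1 \<and> (\<forall>a\<in>R-{c}. E w a = 0)"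
    proof
      fix c assume c: "c \<in> R"
      from False c obtain x y where xy: "x\<in>words n" "y\<in>words n" "\<forall>a\<in>R-{c}. E x a = E y a" "x i \<noteq> y i"
        unfolding recovers_def by blast
      define w where "w = (\<lambda>j. x j + y j)"
      have wW: "w \<in> words n" using words_add xy w_def by simp
      have Ew: "E w = (\<lambda>a. E x a + E y a)" using E_add xy w_def by simp
      have wi: "w i = 1" using xy(4) bit_neq w_def by simp
      have vanish: "\<forall>a\<in>R-{c}. E w a = 0" by (simp add: Ew xy(3))
      have "E w c = 1"
      proof (rule ccontr)
        assume "E w c \<noteq> 1" hence "E w c = 0" using bit_cases2 by blast
        hence "\<forall>a\<in>R. E w a = E (\<lambda>_. 0) a" using vanish E_zero by auto
        hence "w i = (\<lambda>_. 0::bit) i" using less.prems(2) wW words_zero unfolding recovers_def by blast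
        with wi show False by simp
      qed
      thus "\<exists>w. w\<in>words n \<and> w i = 1 \<and> E w c = 1 \<and> (\<forall>a\<in>R-{c}. E w a = 0)"
        using wW wi vanish by blast
    qed
    from bchoice[OF w] obtain w where w: "\<forall>c\<in>R. w c \<in> words n \<and> w c i = 1 \<and> E (w c) c = 1 \<and> (\<forall>a\<in>R-{c}. E (w c) a = 0)"
      by blast
    have "\<forall>x\<in>words n. x i = (\<Sum>c\<in>R. E x c)"
    proof
      fix x assume x: "x \<in> words n"
      define F where "F = {c\<in>R. E x c = 1}"
      have FR: "F \<subseteq> R" and finF: "finite F" using F_def less.prems by auto
      define y where "y = (\<lambda>j. x j + (\<Sum>c\<in>F. w c j))"
      have wF: "\<forall>c\<in>F. w c \<in> words n" using w FR by blast
      have sW: "(\<lambda>j. \<Sum>c\<in>F. w c j) \<in> words n" by (rule words_sum[OF wF])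
      have yW: "y \<in> words n" using words_add[OF x sW] y_def by simp
      have Ey0: "E y = (\<lambda>a. E x a + E (\<lambda>j. \<Sum>c\<in>F. w c j) a)"
        unfolding y_def by (rule E_add[OF x sW])
      have Es: "E (\<lambda>j. \<Sum>c\<in>F. w c j) = (\<lambda>a. \<Sum>c\<in>F. E (w c) a)"
        by (rule E_sum[OF finF wF])
      have Ey: "E y = (\<lambda>a. E x a + (\<Sum>c\<in>F. E (w c) a))" using Ey0 Es by simp
      have "\<forall>a\<in>R. E y a = E (\<lambda>_. 0) a"
      proof
        fix a assume a: "a \<in> R"
        have "(\<Sum>c\<in>F. E (w c) a) = (\<Sum>c\<in>F. if c = a then 1 else 0)"
        proof (rule sum.cong[OF refl])
          fix c assume c: "c \<in> F"
          hence cR: "c \<in> R" using FR by blast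
          show "E (w c) a = (if c = a then 1 else 0)"
          proof (cases "c = a")
            case True thus ?thesis using w cR by simp
          next
            case False hence "a \<in> R - {c}" using a by blast
            thus ?thesis using w cR False by simp
          qed
        qed
        also have "\<dots> = (if a \<in> F then 1 else 0)" by (rule sum.delta[OF finF])
        finally have s: "(\<Sum>c\<in>F. E (w c) a) = (if a \<in> F then 1 else 0)" .
        have "E y a = 0"
        proof (cases "E x a = 1")
          case True hence "a \<in> F" using F_def a by blast
          thus ?thesis using Ey s True by simp
        next
          case False hence "a \<notin> F" "E x a = 0" using F_def bit_cases2[of "E x a"] by auto
          thus ?thesis using Ey s by simp
        qed
        thus "E y a = E (\<lambda>_. 0) a" using E_zero by simp
      qed
      hence "y i = (\<lambda>_. 0::bit) i"
        using less.prems(2)[unfolded recovers_def, rule_format, OF yW words_zero] by blast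
      hence "x i + (\<Sum>c\<in>F. w c i) = 0" using y_def by simp
      hence "x i = (\<Sum>c\<in>F. w c i)" by (rule bit_add_eq0)
      also have "\<dots> = (\<Sum>c\<in>F. E x c)"
      proof (rule sum.cong[OF refl])
        fix c assume c: "c \<in> F"
        hence "c \<in> R" "E x c = 1" using FR F_def by auto
        thus "w c i = E x c" using w by simp
      qed
      also have "\<dots> = (\<Sum>c\<in>R. E x c)"
      proof (rule sum.mono_neutral_left[OF less.prems(1) FR])
        show "\<forall>c\<in>R - F. E x c = 0"
        proof
          fix c assume "c \<in> R - F" thus "E x c = 0" using F_def bit_cases2[of "E x c"] by auto
        qed
      qed
      finally show "x i = (\<Sum>c\<in>R. E x c)" .
    qed
    thus ?thesis by (intro exI[of _ R]) simp
  qed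
qed

definition injR :: "nat set \<Rightarrow> bool" where
  "injR A \<longleftrightarrow> (\<forall>x\<in>words n. \<forall>y\<in>words n. (\<forall>a\<in>A. E x a = E y a) \<longrightarrow> x = y)"

lemma injR_N: "injR {..<N}"
  unfolding injR_def
proof (intro ballI impI)
  fix x y assume xy: "x \<in> words n" "y \<in> words n" "\<forall>a\<in>{..<N}. E x a = E y a"
  have "E x = E y"
  proof
    fix a show "E x a = E y a"
    proof (cases "a < N")
      case False
      then show ?thesis using lc xy unfolding linear_code_def words_def by auto
    qed (use xy in auto)
  qed
  thus "x = y" using lc xy unfolding linear_code_def inj_on_def by blast
qed

lemma min_info:
  assumes "finite A" "injR A"
  shows "\<exists>A'\<subseteq>A. injR A' \<and> (\<forall>b\<in>A'. \<exists>z\<in>words n. E z b = 1 \<and> (\<forall>a\<in>A'-{b}. E z a = 0))"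
  using assms
proof (induction "card A" arbitrary: A rule: less_induct)
  case less
  show ?case
  proof (cases "\<exists>c\<in>A. injR (A - {c})")
    case True
    then obtain c where c: "c\<in>A" "injR (A-{c})" by blast
    have cl: "card (A-{c}) < card A" using card_Diff1_less[OF less.prems(1) c(1)] .
    have fi: "finite (A - {c})" using less.prems(1) by blast
    have "\<exists>A'\<subseteq>A - {c}. injR A' \<and> (\<forall>b\<in>A'. \<exists>z\<in>words n. E z b = 1 \<and> (\<forall>a\<in>A'-{b}. E z a = 0))"
      by (rule less.hyps[OF cl fi c(2)])
    then obtain A' where A': "A' \<subseteq> A - {c}" "injR A'"
      "\<forall>b\<in>A'. \<exists>z\<in>words n. E z b = 1 \<and> (\<forall>a\<in>A'-{b}. E z a = 0)" by blast
    have "A' \<subseteq> A" using A'(1) by blast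
    thus ?thesis using A'(2,3) by blast
  next
    case False
    have "\<forall>b\<in>A. \<exists>z\<in>words n. E z b = 1 \<and> (\<forall>a\<in>A-{b}. E z a = 0)"
    proof
      fix b assume b: "b \<in> A"
      from False b obtain x y where xy: "x\<in>words n" "y\<in>words n" "\<forall>a\<in>A-{b}. E x a = E y a" "x \<noteq> y"
        unfolding injR_def by blast
      define z where "z = (\<lambda>j. x j + y j)"
      have zW: "z \<in> words n" using words_add xy z_def by simp
      have Ez: "E z = (\<lambda>a. E x a + E y a)" using E_add xy z_def by simp
      have vanish: "\<forall>a\<in>A-{b}. E z a = 0" by (simp add: Ez xy(3))
      have "E z b = 1"
      proof (rule ccontr)
        assume "E z b \<noteq> 1" hence "E z b = 0" using bit_cases2 by blast
        hence "\<forall>a\<in>A. E z a = E (\<lambda>_. 0) a" using vanish E_zero by auto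
        hence "z = (\<lambda>_. 0)" using less.prems(2) zW words_zero unfolding injR_def by blast
        hence "\<forall>j. x j + y j = 0" by (simp add: z_def fun_eq_iff)
        hence "x = y" using bit_add_eq0 by blast
        with xy(4) show False by simp
      qed
      thus "\<exists>z\<in>words n. E z b = 1 \<and> (\<forall>a\<in>A-{b}. E z a = 0)" using zW vanish by blast
    qed
    thus ?thesis using less.prems by blast
  qed
qed


lemma batch_lower:
  assumes bc: "batch_code n N 5 E"
  shows "n \<le> (N - n) * (N - n)"
proof -
  have "\<exists>A'\<subseteq>{..<N}. injR A' \<and> (\<forall>b\<in>A'. \<exists>z\<in>words n. E z b = 1 \<and> (\<forall>a\<in>A'-{b}. E z a = 0))"
    by (rule min_info[OF finite_lessThan injR_N])
  then obtain A where AN: "A \<subseteq> {..<N}" and Ainj: "injR A"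
    and Az: "\<forall>b\<in>A. \<exists>z\<in>words n. E z b = 1 \<and> (\<forall>a\<in>A-{b}. E z a = 0)" by blast
  have Az': "\<forall>b\<in>A. \<exists>z. z \<in> words n \<and> E z b = 1 \<and> (\<forall>a\<in>A-{b}. E z a = 0)" using Az by blast
  from bchoice[OF Az'] obtain z where z: "\<forall>b\<in>A. z b \<in> words n \<and> E (z b) b = 1 \<and> (\<forall>a\<in>A-{b}. E (z b) a = 0)"
    by blast
  have finA: "finite A" using AN finite_subset by blast
  have zW: "\<And>b. b \<in> A \<Longrightarrow> z b \<in> words n" using z by blast
  have zE: "\<And>b a. b \<in> A \<Longrightarrow> a \<in> A \<Longrightarrow> E (z b) a = (if a = b then 1 else 0)"
  proof -
    fix b a assume b: "b \<in> A" and a: "a \<in> A"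
    show "E (z b) a = (if a = b then 1 else 0)"
    proof (cases "a = b")
      case True thus ?thesis using z b by simp
    next
      case False hence "a \<in> A - {b}" using a by blast
      thus ?thesis using z b False by simp
    qed
  qed
  define \<phi> where "\<phi> x = (\<lambda>a. if a \<in> A then E x a else (0::bit))" for x
  have inj\<phi>: "inj_on \<phi> (words n)"
  proof (rule inj_onI)
    fix x y assume x: "x \<in> words n" and y: "y \<in> words n" and e: "\<phi> x = \<phi> y"
    have "\<forall>a\<in>A. E x a = E y a"
    proof
      fix a assume a: "a \<in> A"
      from fun_cong[OF e, of a] a show "E x a = E y a" unfolding \<phi>_def by simp
    qed
    thus "x = y" using Ainj x y unfolding injR_def by blast
  qed
  have im\<phi>: "\<phi> ` words n \<subseteq> {f::nat\<Rightarrow>bit. \<forall>a. a \<notin> A \<longrightarrow> f a = 0}"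
    unfolding \<phi>_def by auto
  have cw: "card (words n) = 2 ^ n" using card_supp(1)[of "{..<n}"] words_eq[of n] by simp
  have "card (words n) \<le> card {f::nat\<Rightarrow>bit. \<forall>a. a \<notin> A \<longrightarrow> f a = 0}"
    by (rule card_inj_on_le[OF inj\<phi> im\<phi> card_supp(2)[OF finA]])
  hence "(2::nat) ^ n \<le> 2 ^ card A" using cw card_supp(1)[OF finA] by simp
  hence nA: "n \<le> card A" by (rule power_le_imp_le_exp[rotated]) simp
  have span: "\<And>x. x \<in> words n \<Longrightarrow> x = (\<lambda>i. \<Sum>b\<in>{b\<in>A. E x b = 1}. z b i)"
  proof -
    fix x assume x: "x \<in> words n"
    define S where "S = {b\<in>A. E x b = 1}"
    have SA: "S \<subseteq> A" and finS: "finite S" using S_def finA by auto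
    have zS: "\<forall>b\<in>S. z b \<in> words n" using zW SA by blast
    have sW: "(\<lambda>i. \<Sum>b\<in>S. z b i) \<in> words n" by (rule words_sum[OF zS])
    have Es: "E (\<lambda>i. \<Sum>b\<in>S. z b i) = (\<lambda>a. \<Sum>b\<in>S. E (z b) a)" by (rule E_sum[OF finS zS])
    have "\<forall>a\<in>A. E x a = E (\<lambda>i. \<Sum>b\<in>S. z b i) a"
    proof
      fix a assume a: "a \<in> A"
      have "(\<Sum>b\<in>S. E (z b) a) = (\<Sum>b\<in>S. if a = b then 1 else 0)"
        by (rule sum.cong[OF refl]) (use zE SA a in auto)
      also have "\<dots> = (if a \<in> S then 1 else 0)" by (rule sum.delta'[OF finS])
      finally have "(\<Sum>b\<in>S. E (z b) a) = (if a \<in> S then 1 else 0)" .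
      moreover have "E x a = (if a \<in> S then 1 else 0)"
        using S_def a bit_cases2[of "E x a"] by auto
      ultimately show "E x a = E (\<lambda>i. \<Sum>b\<in>S. z b i) a" using Es by simp
    qed
    hence "x = (\<lambda>i. \<Sum>b\<in>S. z b i)" using Ainj x sW unfolding injR_def by blast
    thus "x = (\<lambda>i. \<Sum>b\<in>{b\<in>A. E x b = 1}. z b i)" using S_def by simp
  qed
  define T where "T = {..<N} - A"
  have finT: "finite T" using T_def by simp
  have cT: "card T = N - card A" using T_def AN card_Diff_subset[OF finA AN] by simp
  define col where "col I = (\<lambda>b. if b \<in> A then \<Sum>i\<in>I. z b i else (0::bit))" for I
  define qf where "qf W = (\<lambda>b. if b \<in> A then \<Sum>(t, t')\<in>W. E (z b) t * E (z b) t' else (0::bit))" for W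
  define Q where "Q = qf ` Pow (T \<times> T)"
  have finTT: "finite (T \<times> T)" using finT by simp
  have Qadd: "\<And>f g. f \<in> Q \<Longrightarrow> g \<in> Q \<Longrightarrow> (\<lambda>b. f b + g b) \<in> Q"
  proof -
    fix f g assume f: "f \<in> Q" and g: "g \<in> Q"
    then obtain W W' where W: "W \<subseteq> T \<times> T" "f = qf W" and W': "W' \<subseteq> T \<times> T" "g = qf W'"
      unfolding Q_def by blast
    have fW: "finite W" "finite W'" using W W' finTT finite_subset by blast+
    have "(\<lambda>b. f b + g b) = qf ((W - W') \<union> (W' - W))"
    proof
      fix b show "f b + g b = qf ((W - W') \<union> (W' - W)) b"
        unfolding W W' qf_def using sum_bit_symdiff[OF fW] by simp
    qed
    moreover have "(W - W') \<union> (W' - W) \<in> Pow (T \<times> T)" using W W' by blast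
    ultimately show "(\<lambda>b. f b + g b) \<in> Q" unfolding Q_def by blast
  qed
  have Q0: "(\<lambda>b. 0) \<in> Q"
  proof -
    have "(\<lambda>b. 0) = qf {}" unfolding qf_def by auto
    thus ?thesis unfolding Q_def by blast
  qed
  have colsing: "\<And>i. i < n \<Longrightarrow> col {i} \<in> Q"
  proof -
    fix i assume i: "i < n"
    have "length (replicate 5 i) = 5 \<and> set (replicate 5 i) \<subseteq> {..<n}" using i by simp
    then obtain R where RN: "\<forall>j<5. R j \<subseteq> {..<N}"
      and Rd: "\<forall>j<5. \<forall>j'<5. j \<noteq> j' \<longrightarrow> R j \<inter> R j' = {}"
      and Rr: "\<forall>j<5. recovers n E (R j) (replicate 5 i ! j)"
      using bc unfolding batch_code_def by blast
    have "\<forall>j\<in>{..<5}. \<exists>F. F \<subseteq> R j \<and> (\<forall>x\<in>words n. x i = (\<Sum>c\<in>F. E x c))"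
    proof
      fix j :: nat assume j: "j \<in> {..<5}"
      hence j: "j < 5" by simp
      have fR: "finite (R j)" using RN j finite_subset by blast
      have "recovers n E (R j) i" using Rr j by simp
      hence "\<exists>F\<subseteq>R j. \<forall>x\<in>words n. x i = (\<Sum>c\<in>F. E x c)" by (rule rec_lin[OF fR])
      thus "\<exists>F. F \<subseteq> R j \<and> (\<forall>x\<in>words n. x i = (\<Sum>c\<in>F. E x c))" by blast
    qed
    from bchoice[OF this] obtain F where F0: "\<forall>j\<in>{..<5}. F j \<subseteq> R j \<and> (\<forall>x\<in>words n. x i = (\<Sum>c\<in>F j. E x c))"
      by blast
    have F: "\<forall>j<5. F j \<subseteq> R j \<and> (\<forall>x\<in>words n. x i = (\<Sum>c\<in>F j. E x c))" using F0 by simp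
    define Y where "Y j b = (\<Sum>c\<in>F j \<inter> T. E (z b) c)" for j b
    have key: "\<And>(j::nat) (b::nat). j < 5 \<Longrightarrow> b \<in> A \<Longrightarrow> z b i = (if b \<in> F j then 1 else 0) + Y j b"
    proof -
      fix j b :: nat assume j: "j < 5" and b: "b \<in> A"
      have FN: "F j \<subseteq> {..<N}" using F RN j by blast
      have fF: "finite (F j)" using FN finite_subset by blast
      have split: "F j = (F j \<inter> A) \<union> (F j \<inter> T)" using FN T_def by blast
      have "z b i = (\<Sum>c\<in>F j. E (z b) c)" using F j zW b by blast
      also have "\<dots> = (\<Sum>c\<in>F j \<inter> A. E (z b) c) + (\<Sum>c\<in>F j \<inter> T. E (z b) c)"
        by (subst split, rule sum.union_disjoint) (use fF T_def in auto)
      also have "(\<Sum>c\<in>F j \<inter> A. E (z b) c) = (\<Sum>c\<in>F j \<inter> A. if c = b then 1 else 0)"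
        by (rule sum.cong[OF refl]) (use zE b in auto)
      also have "\<dots> = (if b \<in> F j \<inter> A then 1 else 0)" by (rule sum.delta) (use fF in auto)
      finally show "z b i = (if b \<in> F j then 1 else 0) + Y j b" using b Y_def by simp
    qed
    have dj: "\<And>(b::nat) (j::nat) (k::nat). j < 5 \<Longrightarrow> k < 5 \<Longrightarrow> j \<noteq> k \<Longrightarrow> \<not> (b \<in> F j \<and> b \<in> F k)"
    proof -
      fix b j k :: nat assume "j < 5" "k < 5" "j \<noteq> k"
      hence "R j \<inter> R k = {}" "F j \<subseteq> R j" "F k \<subseteq> R k" using Rd F by auto
      thus "\<not> (b \<in> F j \<and> b \<in> F k)" by blast
    qed
    define W where "W j k = (F j \<inter> T) \<times> (F k \<inter> T)" for j k
    have prod: "\<And>j k b. Y j b * Y k b = (\<Sum>(t, t')\<in>W j k. E (z b) t * E (z b) t')"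
      unfolding Y_def W_def by (simp add: sum_product sum.cartesian_product)
    have WT: "\<And>j k. W j k \<in> Pow (T \<times> T)" unfolding W_def by blast
    have "col {i} = (\<lambda>b. (\<lambda>b. qf (W 0 1) b + qf (W 0 2) b) b + qf (W 1 2) b)"
    proof
      fix b show "col {i} b = (\<lambda>b. qf (W 0 1) b + qf (W 0 2) b) b + qf (W 1 2) b"
      proof (cases "b \<in> A")
        case True
        have "z b i = Y 0 b * Y 1 b + Y 0 b * Y 2 b + Y 1 b * Y 2 b"
          by (rule bit_maj[OF dj dj dj key key key]) (use True in simp_all)
        thus ?thesis using True unfolding col_def qf_def prod by simp
      next
        case False thus ?thesis unfolding col_def qf_def by simp
      qed
    qed
    moreover have "qf (W j k) \<in> Q" for j k unfolding Q_def using WT by blast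
    ultimately show "col {i} \<in> Q" using Qadd by simp
  qed
  have colI: "\<And>I. I \<subseteq> {..<n} \<Longrightarrow> col I \<in> Q"
  proof -
    fix I :: "nat set" assume I: "I \<subseteq> {..<n}"
    have "finite I" using I finite_subset by blast
    thus "col I \<in> Q" using I
    proof (induction I rule: finite_induct)
      case empty
      have "col {} = (\<lambda>b. 0)" unfolding col_def by auto
      thus ?case using Q0 by simp
    next
      case (insert i I)
      have "col (insert i I) = (\<lambda>b. col {i} b + col I b)"
        unfolding col_def using insert(1,2) by auto
      moreover have "col {i} \<in> Q" using colsing insert(4) by blast
      moreover have "col I \<in> Q" using insert by blast
      ultimately show ?case using Qadd by simp
    qed
  qed
  have colnz: "\<And>K. K \<subseteq> {..<n} \<Longrightarrow> K \<noteq> {} \<Longrightarrow> col K \<noteq> (\<lambda>b. 0)"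
  proof
    fix K assume K: "K \<subseteq> {..<n}" "K \<noteq> {}" and c0: "col K = (\<lambda>b. 0)"
    obtain i0 where i0: "i0 \<in> K" using K by blast
    have finK: "finite K" using K finite_subset by blast
    define x where "x = (\<lambda>i. if i = i0 then (1::bit) else 0)"
    have xW: "x \<in> words n" using i0 K unfolding x_def words_def by auto
    define S where "S = {b\<in>A. E x b = 1}"
    have finS: "finite S" using finA S_def by simp
    have "(\<Sum>i\<in>K. x i) = 1" unfolding x_def using sum.delta[OF finK, of i0 "\<lambda>_. 1"] i0 by simp
    moreover have "(\<Sum>i\<in>K. x i) = (\<Sum>i\<in>K. \<Sum>b\<in>S. z b i)"
      using span[OF xW] S_def by (metis (no_types, lifting))
    moreover have "\<dots> = (\<Sum>b\<in>S. \<Sum>i\<in>K. z b i)" by (rule sum.swap)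
    moreover have "\<dots> = (\<Sum>b\<in>S. col K b)"
      by (rule sum.cong[OF refl]) (use S_def col_def in auto)
    moreover have "\<dots> = 0" using c0 by simp
    ultimately show False by simp
  qed
  have colsym: "\<And>I J. I \<subseteq> {..<n} \<Longrightarrow> J \<subseteq> {..<n} \<Longrightarrow> col ((I - J) \<union> (J - I)) = (\<lambda>b. col I b + col J b)"
  proof
    fix I J b assume I: "I \<subseteq> {..<n}" and J: "J \<subseteq> {..<n}"
    have fI: "finite I" and fJ: "finite J" using I J finite_subset by blast+
    show "col ((I - J) \<union> (J - I)) b = col I b + col J b"
      unfolding col_def using sum_bit_symdiff[OF fI fJ, of "z b"] by simp
  qed
  have colinj: "inj_on col (Pow {..<n})"
  proof (rule inj_onI)
    fix I J assume I: "I \<in> Pow {..<n}" and J: "J \<in> Pow {..<n}" and e: "col I = col J"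
    have "col ((I - J) \<union> (J - I)) = (\<lambda>b. col I b + col J b)" using colsym I J by blast
    also have "\<dots> = (\<lambda>b. 0)" using e by simp
    finally have "(I - J) \<union> (J - I) = {}" using colnz[of "(I - J) \<union> (J - I)"] I J by blast
    thus "I = J" by blast
  qed
  have finQ: "finite Q" unfolding Q_def using finTT by simp
  have "card (col ` Pow {..<n}) = card (Pow {..<(n::nat)})" by (rule card_image[OF colinj])
  also have "\<dots> = 2 ^ n" by (simp add: card_Pow)
  finally have c1: "card (col ` Pow {..<n}) = 2 ^ n" .
  have "col ` Pow {..<n} \<subseteq> Q" using colI by blast
  hence "card (col ` Pow {..<n}) \<le> card Q" by (rule card_mono[OF finQ])
  also have "card Q \<le> card (Pow (T \<times> T))" unfolding Q_def by (rule card_image_le) (simp add: finTT)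
  also have "\<dots> = 2 ^ (card T * card T)" using finTT by (simp add: card_Pow card_cartesian_product)
  finally have "(2::nat) ^ n \<le> 2 ^ (card T * card T)" using c1 by simp
  hence nT: "n \<le> card T * card T" by (rule power_le_imp_le_exp[rotated]) simp
  have "card T \<le> N - n" using cT nA by simp
  hence "card T * card T \<le> (N - n) * (N - n)" using mult_le_mono by blast
  thus ?thesis using nT by linarith
qed
end


definition kap :: "nat \<Rightarrow> nat \<Rightarrow> nat \<Rightarrow> int" where
  "kap p s c = (int (c mod p) - int (c div p) * int s) mod int p"

definition line :: "nat \<Rightarrow> nat \<Rightarrow> nat \<Rightarrow> nat set" where
  "line p s P = {c. c < p * p \<and> kap p s c = kap p s P}"

definition rho :: "nat \<Rightarrow> nat \<Rightarrow> nat \<Rightarrow> nat" where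
  "rho p s P = p * p + s * p + nat (kap p s P)"

definition Ls :: "nat \<Rightarrow> nat \<Rightarrow> nat \<Rightarrow> nat set" where
  "Ls p s P = insert (rho p s P) (line p s P - {P})"

lemma small_dvd_int: "\<bar>x::int\<bar> < m \<Longrightarrow> m dvd x \<Longrightarrow> x = 0"
  using dvd_imp_le_int[of x m] by fastforce

lemma modp_eq: "0 \<le> r \<Longrightarrow> r < (m::int) \<Longrightarrow> m dvd (x - r) \<Longrightarrow> x mod m = r"
  by (metis mod_eq_dvd_iff mod_pos_pos_trivial)

lemma rec_from:
  assumes "\<forall>x\<in>words n. x P = (\<Sum>c\<in>F. E x c) + (\<Sum>k\<in>K. x k)" "F \<subseteq> R"
    "\<forall>k\<in>K. recovers n E R k"
  shows "recovers n E R P"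
  unfolding recovers_def
proof (intro ballI impI)
  fix x y assume x: "x \<in> words n" and y: "y \<in> words n" and a: "\<forall>c\<in>R. E x c = E y c"
  have "(\<Sum>c\<in>F. E x c) = (\<Sum>c\<in>F. E y c)" by (rule sum.cong[OF refl]) (use a assms(2) in blast)
  moreover have "(\<Sum>k\<in>K. x k) = (\<Sum>k\<in>K. y k)"
    by (rule sum.cong[OF refl]) (use assms(3) x y a in \<open>auto simp: recovers_def\<close>)
  moreover have "x P = (\<Sum>c\<in>F. E x c) + (\<Sum>k\<in>K. x k)" using assms(1) x by blast
  moreover have "y P = (\<Sum>c\<in>F. E y c) + (\<Sum>k\<in>K. y k)" using assms(1) y by blast
  ultimately show "x P = y P" by simp
qed

lemma rec_mono: "recovers n E R P \<Longrightarrow> R \<subseteq> R' \<Longrightarrow> recovers n E R' P"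
  unfolding recovers_def by blast

definition occ :: "nat list \<Rightarrow> nat \<Rightarrow> nat" where
  "occ xs j = card {j'. j' < j \<and> xs ! j' = xs ! j}"

definition cnt :: "nat list \<Rightarrow> nat \<Rightarrow> nat" where
  "cnt xs P = card {j. j < length xs \<and> xs ! j = P}"

lemma occ_lt_cnt:
  assumes "j < length xs"
  shows "occ xs j < cnt xs (xs ! j)"
  unfolding occ_def cnt_def
proof (rule psubset_card_mono)
  show "finite {ja. ja < length xs \<and> xs ! ja = xs ! j}" by simp
  show "{j'. j' < j \<and> xs ! j' = xs ! j} \<subset> {ja. ja < length xs \<and> xs ! ja = xs ! j}"
    using assms by auto
qed

lemma occ_mono:
  assumes "j < j'" "xs ! j = xs ! j'"
  shows "occ xs j < occ xs j'"
  unfolding occ_def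
proof (rule psubset_card_mono)
  show "finite {ja. ja < j' \<and> xs ! ja = xs ! j'}" by simp
  show "{ja. ja < j \<and> xs ! ja = xs ! j} \<subset> {ja. ja < j' \<and> xs ! ja = xs ! j'}"
    using assms by auto
qed

lemma occ_neq:
  assumes "j \<noteq> j'" "xs ! j = xs ! j'"
  shows "occ xs j \<noteq> occ xs j'"
proof (cases "j < j'")
  case True thus ?thesis using occ_mono[OF True assms(2)] by simp
next
  case False hence "j' < j" using assms(1) by simp
  thus ?thesis using occ_mono[of j' j xs] assms(2) by simp
qed

lemma assign_batch:
  assumes len: "length xs = 5"
    and sub: "\<forall>Q\<in>set xs. \<forall>k<cnt xs Q. asg Q k \<subseteq> {..<N}"
    and rec: "\<forall>Q\<in>set xs. \<forall>k<cnt xs Q. recovers n E (asg Q k) Q"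
    and dis: "\<And>Q k Q' k'. Q \<in> set xs \<Longrightarrow> Q' \<in> set xs \<Longrightarrow> k < cnt xs Q \<Longrightarrow> k' < cnt xs Q' \<Longrightarrow>
               (Q, k) \<noteq> (Q', k') \<Longrightarrow> asg Q k \<inter> asg Q' k' = {}"
  shows "\<exists>R :: nat \<Rightarrow> nat set. (\<forall>j<5. R j \<subseteq> {..<N}) \<and>
            (\<forall>j<5. \<forall>j'<5. j \<noteq> j' \<longrightarrow> R j \<inter> R j' = {}) \<and>
            (\<forall>j<5. recovers n E (R j) (xs ! j))"
proof (intro exI[of _ "\<lambda>j. asg (xs ! j) (occ xs j)"] conjI allI impI)
  fix j :: nat assume j: "j < 5"
  have m: "xs ! j \<in> set xs" using j len by simp
  have o: "occ xs j < cnt xs (xs ! j)" using occ_lt_cnt j len by simp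
  show "asg (xs ! j) (occ xs j) \<subseteq> {..<N}" using sub m o by blast
  show "recovers n E (asg (xs ! j) (occ xs j)) (xs ! j)" using rec m o by blast
next
  fix j j' :: nat assume j: "j < 5" and j': "j' < 5" and ne: "j \<noteq> j'"
  have m: "xs ! j \<in> set xs" "xs ! j' \<in> set xs" using j j' len by simp_all
  have o: "occ xs j < cnt xs (xs ! j)" "occ xs j' < cnt xs (xs ! j')" using occ_lt_cnt j j' len by simp_all
  have "(xs ! j, occ xs j) \<noteq> (xs ! j', occ xs j')" using occ_neq[OF ne] by auto
  thus "asg (xs ! j) (occ xs j) \<inter> asg (xs ! j') (occ xs j') = {}" using dis m o by blast
qed

lemma enum_subset:
  fixes G :: "nat set"
  assumes "finite G" "m \<le> card G"
  shows "\<exists>g. inj_on g {..<m} \<and> g ` {..<m} \<subseteq> G"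
proof -
  define l where "l = sorted_list_of_set G"
  have l: "distinct l" "length l = card G" "set l = G" using assms l_def by simp_all
  show ?thesis
  proof (intro exI[of _ "\<lambda>k. l ! k"] conjI)
    show "inj_on (\<lambda>k. l ! k) {..<m}"
      using l assms(2) by (auto simp: inj_on_def nth_eq_iff_index_eq)
    show "(\<lambda>k. l ! k) ` {..<m} \<subseteq> G" using l assms(2) nth_mem by fastforce
  qed
qed

lemma cnt_ge1: "Q \<in> set xs \<Longrightarrow> 1 \<le> cnt xs Q"
proof -
  assume "Q \<in> set xs"
  then obtain j where "j < length xs" "xs ! j = Q" by (auto simp: in_set_conv_nth)
  hence "{j. j < length xs \<and> xs ! j = Q} \<noteq> {}" by blast
  thus ?thesis unfolding cnt_def by (simp add: Suc_leI card_gt_0_iff)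
qed

locale prm =
  fixes p :: nat
  assumes pp: "prime p" and p5: "5 \<le> p"
begin

lemma p_pos: "0 < p" using p5 by simp

lemma kap_range: "0 \<le> kap p s c" "kap p s c < int p"
  unfolding kap_def using p_pos by auto

lemma kap_dvd: "kap p s c = kap p s c' \<longleftrightarrow>
   int p dvd ((int (c mod p) - int (c div p) * int s) - (int (c' mod p) - int (c' div p) * int s))"
  unfolding kap_def by (rule mod_eq_dvd_iff)

lemma div_lt: "c < p * p \<Longrightarrow> c div p < p"
  by (simp add: less_mult_imp_div_less)

lemma kap_inj:
  assumes ss: "s \<noteq> s'" "s < 5" "s' < 5" and cc: "c < p * p" "c' < p * p"
    and k1: "kap p s c = kap p s c'" and k2: "kap p s' c = kap p s' c'"
  shows "c = c'"
proof -
  define i where "i = int (c div p)"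
  define j where "j = int (c mod p)"
  define i' where "i' = int (c' div p)"
  define j' where "j' = int (c' mod p)"
  have d1: "int p dvd ((j - i * int s) - (j' - i' * int s))" using k1 kap_dvd i_def j_def i'_def j'_def by simp
  have d2: "int p dvd ((j - i * int s') - (j' - i' * int s'))" using k2 kap_dvd i_def j_def i'_def j'_def by simp
  have "int p dvd (((j - i * int s) - (j' - i' * int s)) - ((j - i * int s') - (j' - i' * int s')))"
    using d1 d2 by (rule dvd_diff)
  moreover have "((j - i * int s) - (j' - i' * int s)) - ((j - i * int s') - (j' - i' * int s')) = (i - i') * (int s' - int s)"
    by (simp add: algebra_simps)
  ultimately have "int p dvd (i - i') * (int s' - int s)" by simp
  moreover have pri: "prime (int p)" using pp by (simp add: prime_nat_int_transfer)
  ultimately have "int p dvd (i - i') \<or> int p dvd (int s' - int s)" using prime_dvd_mult_iff by blast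
  moreover have "\<not> int p dvd (int s' - int s)"
  proof
    assume "int p dvd (int s' - int s)"
    moreover have "\<bar>int s' - int s\<bar> < int p" using ss p5 by linarith
    ultimately have "int s' - int s = 0" by (rule small_dvd_int[rotated])
    thus False using ss by simp
  qed
  ultimately have "int p dvd (i - i')" by blast
  moreover have "\<bar>i - i'\<bar> < int p" using div_lt[OF cc(1)] div_lt[OF cc(2)] i_def i'_def by linarith
  ultimately have ii: "i = i'" using small_dvd_int by fastforce
  hence "int p dvd (j - j')" using d1 by (simp add: algebra_simps)
  moreover have "\<bar>j - j'\<bar> < int p"
  proof -
    have "c mod p < p" "c' mod p < p" using p_pos by simp_all
    thus ?thesis using j_def j'_def by linarith
  qed
  ultimately have jj: "j = j'" using small_dvd_int by fastforce
  have "c div p = c' div p" "c mod p = c' mod p" using ii jj i_def i'_def j_def j'_def by simp_all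
  thus "c = c'" by (metis div_mult_mod_eq)
qed

lemma meet:
  assumes ss: "s \<noteq> s'" "s < 5" "s' < 5"
  shows "\<exists>U<p * p. kap p s U = kap p s P \<and> kap p s' U = kap p s' Q"
proof -
  define A0 where "A0 = kap p s P"
  define D0 where "D0 = kap p s' Q"
  have pri: "prime (int p)" using pp by (simp add: prime_nat_int_transfer)
  have nd: "\<not> int p dvd (int s' - int s)"
  proof
    assume "int p dvd (int s' - int s)"
    moreover have "\<bar>int s' - int s\<bar> < int p" using ss p5 by linarith
    ultimately have "int s' - int s = 0" by (rule small_dvd_int[rotated])
    thus False using ss by simp
  qed
  have cop: "coprime (int s' - int s) (int p)"
    using nd pri by (metis coprime_commute prime_imp_coprime)
  obtain u v where uv: "u * (int s' - int s) + v * int p = 1"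
    using bezout_coefficients_fst_snd[of "int s' - int s" "int p"] cop
    by (metis coprime_imp_gcd_eq_1)
  define i where "i = (u * (A0 - D0)) mod int p"
  define j where "j = (A0 + i * int s) mod int p"
  have i0: "0 \<le> i" "i < int p" using i_def p_pos by auto
  have j0: "0 \<le> j" "j < int p" using j_def p_pos by auto
  define U where "U = nat i * p + nat j"
  have Ult: "U < p * p"
  proof -
    have a: "nat i < p" "nat j < p" using i0 j0 by linarith+
    have "U < (nat i + 1) * p" unfolding U_def using a by simp
    also have "\<dots> \<le> p * p" using a(1) by (intro mult_le_mono1) simp
    finally show ?thesis .
  qed
  have Udiv: "int (U div p) = i" and Umod: "int (U mod p) = j"
    using i0 j0 p_pos unfolding U_def by simp_all
  have k1: "kap p s U = A0"
  proof -
    have "kap p s U = (j - i * int s) mod int p" unfolding kap_def Udiv Umod ..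
    also have "\<dots> = A0"
    proof (rule modp_eq)
      show "0 \<le> A0" "A0 < int p" using kap_range A0_def by auto
      have "int p dvd (j - (A0 + i * int s))" unfolding j_def by (simp add: mod_eq_dvd_iff[symmetric])
      thus "int p dvd (j - i * int s - A0)" by (simp add: algebra_simps)
    qed
    finally show ?thesis .
  qed
  have k2: "kap p s' U = D0"
  proof -
    have "kap p s' U = (j - i * int s') mod int p" unfolding kap_def Udiv Umod ..
    also have "\<dots> = D0"
    proof (rule modp_eq)
      show "0 \<le> D0" "D0 < int p" using kap_range D0_def by auto
      have a: "int p dvd (j - (A0 + i * int s))" unfolding j_def by (simp add: mod_eq_dvd_iff[symmetric])
      have b: "int p dvd (i - u * (A0 - D0))" unfolding i_def by (simp add: mod_eq_dvd_iff[symmetric])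
      hence b': "int p dvd ((i - u * (A0 - D0)) * (int s' - int s))" by simp
      have c: "int p dvd (v * int p * (A0 - D0))" by simp
      have "j - i * int s' - D0 = (j - (A0 + i * int s)) - (i - u * (A0 - D0)) * (int s' - int s)
            - (A0 - D0) * (u * (int s' - int s) + v * int p) + v * int p * (A0 - D0) + (A0 - D0)"
        by (simp add: algebra_simps)
      also have "\<dots> = (j - (A0 + i * int s)) - (i - u * (A0 - D0)) * (int s' - int s) + v * int p * (A0 - D0)"
        using uv by simp
      finally have e: "j - i * int s' - D0 = (j - (A0 + i * int s)) - (i - u * (A0 - D0)) * (int s' - int s) + v * int p * (A0 - D0)" .
      show "int p dvd (j - i * int s' - D0)" unfolding e by (rule dvd_add[OF dvd_diff[OF a b'] c])
    qed
    finally show ?thesis .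
  qed
  show ?thesis using Ult k1 k2 A0_def D0_def by blast
qed


abbreviation EE :: "(nat \<Rightarrow> bit) \<Rightarrow> nat \<Rightarrow> bit" where
  "EE \<equiv> array_code_parity p p [0, 1, 2, 3, 4]"

lemma S5: "s < 5 \<Longrightarrow> [0, 1, 2, 3, 4::nat] ! s = s"
proof -
  assume "s < 5"
  hence "s = 0 \<or> s = 1 \<or> s = 2 \<or> s = 3 \<or> s = 4" by arith
  thus ?thesis by auto
qed

lemma E_info: "c < p * p \<Longrightarrow> EE x c = x c"
  unfolding array_code_parity_def array_code_def by simp

lemma hmap:
  assumes "i < p"
  shows "(i * p + (t + i * s) mod p) div p = i" "(i * p + (t + i * s) mod p) mod p = (t + i * s) mod p"
  using assms p_pos by simp_all

lemma h_inj: "inj_on (\<lambda>i. i * p + (t + i * s) mod p) {..<p}"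
proof (rule inj_onI)
  fix i j assume ij: "i \<in> {..<p}" "j \<in> {..<p}" and e: "i * p + (t + i * s) mod p = j * p + (t + j * s) mod p"
  have a: "(i * p + (t + i * s) mod p) div p = i" and b: "(j * p + (t + j * s) mod p) div p = j"
    using hmap(1)[of i t s] hmap(1)[of j t s] ij by auto
  show "i = j" using a b e by metis
qed

lemma line_img:
  assumes t: "t < p"
  shows "{c. c < p * p \<and> kap p s c = int t} = (\<lambda>i. i * p + (t + i * s) mod p) ` {..<p}"
proof (rule set_eqI, rule iffI)
  fix c assume c: "c \<in> {c. c < p * p \<and> kap p s c = int t}"
  define i where "i = c div p"
  have ip: "i < p" using c div_lt i_def by simp
  have "int ((t + i * s) mod p) = (int t + int i * int s) mod int p" by (simp add: zmod_int)
  also have "\<dots> = ((int (c mod p) - int i * int s) mod int p + int i * int s) mod int p"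
    using c i_def unfolding kap_def by simp
  also have "\<dots> = int (c mod p) mod int p" by (simp add: mod_add_left_eq)
  also have "\<dots> = int (c mod p)" using p_pos by simp
  finally have "(t + i * s) mod p = c mod p" by simp
  hence "c = i * p + (t + i * s) mod p" using i_def by simp
  thus "c \<in> (\<lambda>i. i * p + (t + i * s) mod p) ` {..<p}" using ip by blast
next
  fix c assume "c \<in> (\<lambda>i. i * p + (t + i * s) mod p) ` {..<p}"
  then obtain i where i: "i < p" and c: "c = i * p + (t + i * s) mod p" by blast
  have "c < (i + 1) * p" using c p_pos by simp
  also have "\<dots> \<le> p * p" using i by (intro mult_le_mono1) simp
  finally have cl: "c < p * p" .
  have "kap p s c = (int ((t + i * s) mod p) - int i * int s) mod int p"
    unfolding kap_def using hmap[OF i] c by simp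
  also have "\<dots> = ((int t + int i * int s) mod int p - int i * int s) mod int p" by (simp add: zmod_int)
  also have "\<dots> = int t mod int p" by (simp add: mod_diff_left_eq)
  also have "\<dots> = int t" using t by simp
  finally show "c \<in> {c. c < p * p \<and> kap p s c = int t}" using cl by simp
qed

lemma line_eq: "line p s P = {c. c < p * p \<and> kap p s c = int (nat (kap p s P))}"
  unfolding line_def using kap_range by simp

lemma line_finite: "finite (line p s P)"
  unfolding line_def by simp

lemma line_lt: "c \<in> line p s P \<Longrightarrow> c < p * p"
  unfolding line_def by simp

lemma in_line: "P < p * p \<Longrightarrow> P \<in> line p s P"
  unfolding line_def by simp

lemma E_rho:
  assumes s: "s < 5"
  shows "EE x (rho p s P) = (\<Sum>c\<in>line p s P. x c)"
proof -
  define t where "t = nat (kap p s P)"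
  have t: "t < p" using kap_range[of s P] t_def by linarith
  have c1: "\<not> rho p s P < p * p" unfolding rho_def by simp
  have "s * p + t < (s + 1) * p" using t by simp
  also have "\<dots> \<le> 5 * p" using s by (intro mult_le_mono1) simp
  finally have st: "s * p + t < 5 * p" .
  have c2: "rho p s P \<noteq> p * p + 5 * p" "rho p s P < p * p + 5 * p" using st unfolding rho_def t_def by simp_all
  have dv: "(rho p s P - p * p) div p = s" "(rho p s P - p * p) mod p = t"
    unfolding rho_def t_def[symmetric] using t p_pos by simp_all
  have "EE x (rho p s P) = (\<Sum>(i, j)\<in>D p p s t. x (i * p + j))"
    unfolding array_code_parity_def array_code_def using c1 c2 dv S5[OF s] by (simp add: Let_def)
  also have "D p p s t = (\<lambda>i. (i, (t + i * s) mod p)) ` {..<p}" unfolding D_def by auto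
  also have "(\<Sum>(i, j)\<in>(\<lambda>i. (i, (t + i * s) mod p)) ` {..<p}. x (i * p + j)) = (\<Sum>i<p. x (i * p + (t + i * s) mod p))"
    by (subst sum.reindex) (auto simp: inj_on_def)
  also have "\<dots> = (\<Sum>c\<in>(\<lambda>i. i * p + (t + i * s) mod p) ` {..<p}. x c)"
    by (rule sum.reindex[OF h_inj, symmetric, unfolded comp_def])
  also have "(\<lambda>i. i * p + (t + i * s) mod p) ` {..<p} = line p s P"
    unfolding line_eq t_def[symmetric] using line_img[OF t] by simp
  finally show ?thesis .
qed

lemma E_linear: "linear_code (p * p) (p * p + 5 * p + 1) EE"
  unfolding linear_code_def
proof (intro conjI ballI)
  fix x assume "x \<in> words (p * p)"
  show "EE x \<in> words (p * p + 5 * p + 1)"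
    unfolding words_def array_code_parity_def array_code_def by simp
next
  fix x y assume x: "x \<in> words (p * p)" and y: "y \<in> words (p * p)"
  show "EE (\<lambda>i. x i + y i) = (\<lambda>c. EE x c + EE y c)"
    unfolding array_code_parity_def array_code_def by (auto simp: Let_def sum.distrib split_def)
next
  show "inj_on EE (words (p * p))"
  proof (rule inj_onI)
    fix x y assume x: "x \<in> words (p * p)" and y: "y \<in> words (p * p)" and e: "EE x = EE y"
    show "x = y"
    proof
      fix c show "x c = y c"
      proof (cases "c < p * p")
        case True thus ?thesis using fun_cong[OF e, of c] E_info by simp
      next
        case False thus ?thesis using x y unfolding words_def by simp
      qed
    qed
  qed
qed

lemma line_rep:
  assumes P: "P < p * p" and s: "s < 5" and K: "K \<subseteq> line p s P - {P}"
  shows "\<forall>x\<in>words (p * p). x P = (\<Sum>c\<in>insert (rho p s P) (line p s P - insert P K). EE x c) + (\<Sum>k\<in>K. x k)"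
proof
  fix x assume x: "x \<in> words (p * p)"
  define L where "L = line p s P"
  have fL: "finite L" using line_finite L_def by simp
  have PL: "P \<in> L" using in_line[OF P] L_def by simp
  have rL: "rho p s P \<notin> L - insert P K" using line_lt L_def unfolding rho_def by fastforce
  have fK: "finite K" using K fL L_def finite_subset by blast
  have a: "(\<Sum>c\<in>insert (rho p s P) (L - insert P K). EE x c) = EE x (rho p s P) + (\<Sum>c\<in>L - insert P K. EE x c)"
    using rL fL by simp
  have b: "(\<Sum>c\<in>L - insert P K. EE x c) = (\<Sum>c\<in>L - insert P K. x c)"
    by (rule sum.cong[OF refl]) (use E_info line_lt L_def in auto)
  have c: "(\<Sum>c\<in>L. x c) = x P + (\<Sum>c\<in>L - {P}. x c)"
    using sum.remove[OF fL PL] by simp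
  have "(\<Sum>c\<in>L - {P}. x c) = (\<Sum>c\<in>(L - {P}) - K. x c) + (\<Sum>c\<in>K. x c)"
    using sum.subset_diff[of K "L - {P}" x] K fL L_def by simp
  also have "(L - {P}) - K = L - insert P K" by blast
  finally have d: "(\<Sum>c\<in>L - {P}. x c) = (\<Sum>c\<in>L - insert P K. x c) + (\<Sum>c\<in>K. x c)" .
  have e: "EE x (rho p s P) = (\<Sum>c\<in>L. x c)" using E_rho[OF s] L_def by simp
  show "x P = (\<Sum>c\<in>insert (rho p s P) (line p s P - insert P K). EE x c) + (\<Sum>k\<in>K. x k)"
    unfolding L_def[symmetric] a b e c d by (simp add: algebra_simps)
qed

lemma rec_Ls: "P < p * p \<Longrightarrow> s < 5 \<Longrightarrow> recovers (p * p) EE (Ls p s P) P"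
  using rec_from[OF line_rep[of P s "{}"], of "Ls p s P"] unfolding Ls_def by simp

lemma rec_sing: "P < p * p \<Longrightarrow> recovers (p * p) EE {P} P"
  unfolding recovers_def using E_info by auto

lemma rho_ge: "p * p \<le> rho p s P" unfolding rho_def by simp

lemma rho_inj:
  assumes "rho p s P = rho p s' Q"
  shows "s = s'" "kap p s P = kap p s' Q"
proof -
  have a: "nat (kap p s P) < p" "nat (kap p s' Q) < p" using kap_range by (simp_all add: nat_less_iff)
  have e: "s * p + nat (kap p s P) = s' * p + nat (kap p s' Q)" using assms unfolding rho_def by simp
  have "(s * p + nat (kap p s P)) div p = s" "(s' * p + nat (kap p s' Q)) div p = s'"
    using a p_pos by simp_all
  thus "s = s'" using e by simp
  have "(s * p + nat (kap p s P)) mod p = nat (kap p s P)" "(s' * p + nat (kap p s' Q)) mod p = nat (kap p s' Q)"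
    using a p_pos by simp_all
  hence "nat (kap p s P) = nat (kap p s' Q)" using e by simp
  thus "kap p s P = kap p s' Q" using kap_range by (simp add: nat_eq_iff2)
qed

lemma mem_Ls: "c \<in> Ls p s P \<longleftrightarrow> c = rho p s P \<or> (c < p * p \<and> kap p s c = kap p s P \<and> c \<noteq> P)"
  unfolding Ls_def line_def by auto

lemma Ls_lt: "s < 5 \<Longrightarrow> Ls p s P \<subseteq> {..<p * p + 5 * p + 1}"
proof
  fix c assume s: "s < 5" and c: "c \<in> Ls p s P"
  have t: "nat (kap p s P) < p" using kap_range by (simp add: nat_less_iff)
  have "s * p + nat (kap p s P) < (s + 1) * p" using t by simp
  also have "\<dots> \<le> 5 * p" using s by (intro mult_le_mono1) simp
  finally have "rho p s P < p * p + 5 * p" unfolding rho_def by simp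
  thus "c \<in> {..<p * p + 5 * p + 1}" using c mem_Ls by auto
qed

lemma Ls_disj_slope:
  assumes "s \<noteq> s'" "s < 5" "s' < 5" "P < p * p"
  shows "Ls p s P \<inter> Ls p s' P = {}"
proof -
  { fix c assume c: "c \<in> Ls p s P" "c \<in> Ls p s' P"
    have False
    proof (cases "c = rho p s P \<or> c = rho p s' P")
      case True
      hence "c \<ge> p * p" using rho_ge by auto
      hence "c = rho p s P" "c = rho p s' P" using c mem_Ls by auto
      thus False using rho_inj assms by metis
    next
      case False
      hence "c < p * p" "kap p s c = kap p s P" "kap p s' c = kap p s' P" "c \<noteq> P" using c mem_Ls by auto
      thus False using kap_inj[OF assms(1-3)] assms(4) by blast
    qed }
  thus ?thesis by blast
qed

lemma Ls_disj_par:
  assumes "kap p s P \<noteq> kap p s Q"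
  shows "Ls p s P \<inter> Ls p s Q = {}"
proof -
  { fix c assume c: "c \<in> Ls p s P" "c \<in> Ls p s Q"
    have False
    proof (cases "c = rho p s P \<or> c = rho p s Q")
      case True
      hence "c \<ge> p * p" using rho_ge by auto
      hence "c = rho p s P" "c = rho p s Q" using c mem_Ls by auto
      thus False using rho_inj assms by metis
    next
      case False
      thus False using c mem_Ls assms by auto
    qed }
  thus ?thesis by blast
qed
end

context prm begin

lemma P_notin_Ls: "P < p * p \<Longrightarrow> P \<notin> Ls p s P"
  using mem_Ls[of P s P] rho_ge[of s P] by auto

lemma notin_Ls: "Q < p * p \<Longrightarrow> kap p s Q \<noteq> kap p s P \<Longrightarrow> Q \<notin> Ls p s P"
  using mem_Ls[of Q s P] rho_ge[of s P] by auto

lemma sing_lt: "Q < p * p \<Longrightarrow> {Q} \<subseteq> {..<p * p + 5 * p + 1}"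
  by simp

lemma caseA:
  assumes len: "length xs = 5" and pts: "set xs \<subseteq> {..<p * p}" and P: "P < p * p"
    and single: "\<forall>Q\<in>set xs. Q \<noteq> P \<longrightarrow> cnt xs Q \<le> 1"
  shows "\<exists>R :: nat \<Rightarrow> nat set. (\<forall>j<5. R j \<subseteq> {..<p * p + 5 * p + 1}) \<and>
            (\<forall>j<5. \<forall>j'<5. j \<noteq> j' \<longrightarrow> R j \<inter> R j' = {}) \<and>
            (\<forall>j<5. recovers (p * p) EE (R j) (xs ! j))"
proof -
  define Oth where "Oth = set xs - {P}"
  define G where "G = {s. s < 5 \<and> (\<forall>Q\<in>Oth. kap p s Q \<noteq> kap p s P)}"
  have finO: "finite Oth" using Oth_def by simp
  define SP where "SP = {j. j < 5 \<and> xs ! j = P}"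
  define SN where "SN = {j. j < 5 \<and> xs ! j \<noteq> P}"
  have "SP \<union> SN = {..<5}" "SP \<inter> SN = {}" using SP_def SN_def by auto
  hence "card SP + card SN = 5" using card_Un_disjoint[of SP SN] SP_def SN_def by simp
  moreover have "Oth \<subseteq> (\<lambda>j. xs ! j) ` SN"
  proof
    fix Q assume "Q \<in> Oth"
    then obtain j where "j < 5" "xs ! j = Q" "Q \<noteq> P" using Oth_def len by (auto simp: in_set_conv_nth)
    thus "Q \<in> (\<lambda>j. xs ! j) ` SN" using SN_def by blast
  qed
  hence "card Oth \<le> card SN" using SN_def surj_card_le by (metis card_image_le finite_Collect_conjI finite_lessThan lessThan_def order_trans card_mono finite_imageI)
  moreover have "cnt xs P = card SP" unfolding cnt_def SP_def len ..
  ultimately have cntP: "cnt xs P + card Oth \<le> 5" by linarith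
  have badeq: "{..<5} - G = (\<Union>Q\<in>Oth. {s. s < 5 \<and> kap p s Q = kap p s P})" unfolding G_def by auto
  have one: "\<And>Q. Q \<in> Oth \<Longrightarrow> card {s. s < 5 \<and> kap p s Q = kap p s P} \<le> 1"
  proof -
    fix Q assume Q: "Q \<in> Oth"
    have Qp: "Q < p * p" "Q \<noteq> P" using Q Oth_def pts by auto
    have "\<forall>a\<in>{s. s < 5 \<and> kap p s Q = kap p s P}. \<forall>b\<in>{s. s < 5 \<and> kap p s Q = kap p s P}. a = b"
    proof (intro ballI, rule ccontr)
      fix a b assume a: "a \<in> {s. s < 5 \<and> kap p s Q = kap p s P}" and b: "b \<in> {s. s < 5 \<and> kap p s Q = kap p s P}"
        and ne: "a \<noteq> b"
      have "Q = P" using kap_inj[OF ne _ _ Qp(1) P] a b by simp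
      thus False using Qp by simp
    qed
    thus "card {s. s < 5 \<and> kap p s Q = kap p s P} \<le> 1" using card_le_Suc0_iff_eq[of "{s. s < 5 \<and> kap p s Q = kap p s P}"] by simp
  qed
  have "card ({..<5} - G) \<le> (\<Sum>Q\<in>Oth. card {s. s < 5 \<and> kap p s Q = kap p s P})"
    unfolding badeq by (rule card_UN_le[OF finO])
  also have "\<dots> \<le> (\<Sum>Q\<in>Oth. 1)" by (rule sum_mono) (use one in simp)
  also have "\<dots> = card Oth" by simp
  finally have bad: "card ({..<5} - G) \<le> card Oth" .
  have GS: "G \<subseteq> {..<5}" using G_def by auto
  have finG: "finite G" using GS finite_subset by blast
  have "card ({..<5} - G) = 5 - card G" using card_Diff_subset[OF finG GS] by simp
  hence cG: "cnt xs P \<le> card G" using bad cntP by linarith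
  obtain g where ginj: "inj_on g {..<cnt xs P}" and gG: "g ` {..<cnt xs P} \<subseteq> G"
    using enum_subset[OF finG cG] by blast
  have g5: "\<And>k. k < cnt xs P \<Longrightarrow> g k < 5" using gG G_def by blast
  have gO: "\<And>k Q. k < cnt xs P \<Longrightarrow> Q \<in> Oth \<Longrightarrow> kap p (g k) Q \<noteq> kap p (g k) P" using gG G_def by blast
  define asg where "asg Q k = (if Q \<noteq> P then {Q} else if k = 0 then {P} else Ls p (g (k - 1)) P)" for Q k
  show ?thesis
  proof (rule assign_batch[OF len])
    show "\<forall>Q\<in>set xs. \<forall>k<cnt xs Q. asg Q k \<subseteq> {..<p * p + 5 * p + 1}"
    proof (intro ballI allI impI)
      fix Q k assume Q: "Q \<in> set xs" and k: "k < cnt xs Q"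
      show "asg Q k \<subseteq> {..<p * p + 5 * p + 1}"
      proof (cases "Q \<noteq> P \<or> k = 0")
        case True thus ?thesis unfolding asg_def using pts Q P by auto
      next
        case False thus ?thesis unfolding asg_def using Ls_lt g5 k by simp
      qed
    qed
    show "\<forall>Q\<in>set xs. \<forall>k<cnt xs Q. recovers (p * p) EE (asg Q k) Q"
    proof (intro ballI allI impI)
      fix Q k assume Q: "Q \<in> set xs" and k: "k < cnt xs Q"
      show "recovers (p * p) EE (asg Q k) Q"
      proof (cases "Q \<noteq> P \<or> k = 0")
        case True thus ?thesis unfolding asg_def using pts Q P rec_sing by auto
      next
        case False thus ?thesis unfolding asg_def using rec_Ls[OF P] g5 k by simp
      qed
    qed
    fix Q k Q' k' assume Q: "Q \<in> set xs" and Q': "Q' \<in> set xs" and k: "k < cnt xs Q" and k': "k' < cnt xs Q'"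
      and ne: "(Q, k) \<noteq> (Q', k')"
    have Qlt: "Q < p * p" "Q' < p * p" using Q Q' pts by auto
    show "asg Q k \<inter> asg Q' k' = {}"
    proof (cases "Q = P")
      case QP: True
      show ?thesis
      proof (cases "Q' = P")
        case Q'P: True
        hence kk: "k \<noteq> k'" using QP ne by simp
        show ?thesis
        proof (cases "k = 0")
          case True thus ?thesis unfolding asg_def using QP Q'P kk P_notin_Ls[OF P] by auto
        next
          case k0: False
          show ?thesis
          proof (cases "k' = 0")
            case True thus ?thesis unfolding asg_def using QP Q'P kk P_notin_Ls[OF P] by auto
          next
            case False
            have "g (k - 1) \<noteq> g (k' - 1)" using ginj k k' kk k0 False QP Q'P unfolding inj_on_def by fastforce
            moreover have "g (k - 1) < 5" "g (k' - 1) < 5" using g5 k k' QP Q'P by auto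
            ultimately show ?thesis unfolding asg_def using QP Q'P k0 False Ls_disj_slope[OF _ _ _ P] by simp
          qed
        qed
      next
        case Q'P: False
        hence QOt: "Q' \<in> Oth" using Q' Oth_def by simp
        show ?thesis
        proof (cases "k = 0")
          case True thus ?thesis unfolding asg_def using QP Q'P by auto
        next
          case False
          have "Q' \<notin> Ls p (g (k - 1)) P" using notin_Ls[OF Qlt(2) gO[OF _ QOt]] k QP by simp
          thus ?thesis unfolding asg_def using QP Q'P False by auto
        qed
      qed
    next
      case QP: False
      hence QOt: "Q \<in> Oth" using Q Oth_def by simp
      have k0: "k = 0" using single Q QP k by fastforce
      show ?thesis
      proof (cases "Q' = P")
        case Q'P: True
        show ?thesis
        proof (cases "k' = 0")
          case True thus ?thesis unfolding asg_def using QP Q'P by auto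
        next
          case False
          have "Q \<notin> Ls p (g (k' - 1)) P" using notin_Ls[OF Qlt(1) gO[OF _ QOt]] k' Q'P by simp
          thus ?thesis unfolding asg_def using QP Q'P False by auto
        qed
      next
        case Q'P: False
        have "k' = 0" using single Q' Q'P k' by fastforce
        hence "Q \<noteq> Q'" using ne k0 by simp
        thus ?thesis unfolding asg_def using QP Q'P by auto
      qed
    qed
  qed
qed


lemma coll1:
  assumes "X < p * p" "Y < p * p" "X \<noteq> Y"
  shows "card {s. s < 5 \<and> kap p s X = kap p s Y} \<le> 1"
proof -
  have "\<forall>a\<in>{s. s < 5 \<and> kap p s X = kap p s Y}. \<forall>b\<in>{s. s < 5 \<and> kap p s X = kap p s Y}. a = b"
  proof (intro ballI, rule ccontr)
    fix a b assume a: "a \<in> {s. s < 5 \<and> kap p s X = kap p s Y}" and b: "b \<in> {s. s < 5 \<and> kap p s X = kap p s Y}"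
      and ne: "a \<noteq> b"
    have "X = Y" using kap_inj[OF ne _ _ assms(1,2)] a b by simp
    thus False using assms by simp
  qed
  thus ?thesis using card_le_Suc0_iff_eq[of "{s. s < 5 \<and> kap p s X = kap p s Y}"] by simp
qed

lemma caseB:
  assumes len: "length xs = 5" and lt: "P < p * p" "Q < p * p" "R < p * p"
    and dist: "P \<noteq> Q" "P \<noteq> R" "Q \<noteq> R"
    and sub: "set xs \<subseteq> {P, Q, R}" and c2: "\<forall>X\<in>set xs. cnt xs X \<le> 2"
  shows "\<exists>Rs :: nat \<Rightarrow> nat set. (\<forall>j<5. Rs j \<subseteq> {..<p * p + 5 * p + 1}) \<and>
            (\<forall>j<5. \<forall>j'<5. j \<noteq> j' \<longrightarrow> Rs j \<inter> Rs j' = {}) \<and>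
            (\<forall>j<5. recovers (p * p) EE (Rs j) (xs ! j))"
proof -
  define B where "B X Y = {s. s < 5 \<and> kap p s X = kap p s Y}" for X Y
  have fB: "finite (B P Q \<union> B P R \<union> B Q R)" unfolding B_def by simp
  have "card (B P Q \<union> B P R \<union> B Q R) \<le> card (B P Q) + card (B P R) + card (B Q R)"
    by (metis (no_types, lifting) add_le_mono card_Un_le le_refl order_trans)
  also have "\<dots> \<le> 3" using coll1[of P Q] coll1[of P R] coll1[of Q R] lt dist unfolding B_def by simp
  finally have cl: "card (B P Q \<union> B P R \<union> B Q R) < card {..<5::nat}" by simp
  have "\<not> {..<5} \<subseteq> B P Q \<union> B P R \<union> B Q R"
  proof
    assume "{..<5} \<subseteq> B P Q \<union> B P R \<union> B Q R"
    hence "card {..<5::nat} \<le> card (B P Q \<union> B P R \<union> B Q R)" by (rule card_mono[OF fB])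
    thus False using cl by simp
  qed
  then obtain a where a5: "a < 5" and aB: "a \<notin> B P Q \<union> B P R \<union> B Q R" by blast
  have good: "\<And>X Y. X \<in> {P, Q, R} \<Longrightarrow> Y \<in> {P, Q, R} \<Longrightarrow> X \<noteq> Y \<Longrightarrow> kap p a X \<noteq> kap p a Y"
    using aB a5 unfolding B_def by auto
  have ltX: "\<And>X. X \<in> set xs \<Longrightarrow> X < p * p" using sub lt by auto
  define asg where "asg X (k::nat) = (if k = 0 then {X} else Ls p a X)" for X k
  show ?thesis
  proof (rule assign_batch[OF len])
    show "\<forall>X\<in>set xs. \<forall>k<cnt xs X. asg X k \<subseteq> {..<p * p + 5 * p + 1}"
    proof (intro ballI allI impI)
      fix X k assume "X \<in> set xs" "k < cnt xs X"
      hence "X < p * p" using ltX by blast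
      thus "asg X k \<subseteq> {..<p * p + 5 * p + 1}" unfolding asg_def using Ls_lt[OF a5] by auto
    qed
    show "\<forall>X\<in>set xs. \<forall>k<cnt xs X. recovers (p * p) EE (asg X k) X"
    proof (intro ballI allI impI)
      fix X k assume "X \<in> set xs" "k < cnt xs X"
      hence "X < p * p" using ltX by blast
      thus "recovers (p * p) EE (asg X k) X" unfolding asg_def using rec_Ls[OF _ a5] rec_sing by auto
    qed
    fix X k Y k' assume X: "X \<in> set xs" and Y: "Y \<in> set xs" and k: "k < cnt xs X" and k': "k' < cnt xs Y"
      and ne: "(X, k) \<noteq> (Y, k')"
    have XY: "X \<in> {P, Q, R}" "Y \<in> {P, Q, R}" using X Y sub by auto
    show "asg X k \<inter> asg Y k' = {}"
    proof (cases "X = Y")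
      case True
      hence kk: "k \<noteq> k'" using ne by simp
      have "k < 2" "k' < 2" using k k' c2 X Y True by fastforce+
      hence "(k = 0 \<and> k' \<noteq> 0) \<or> (k \<noteq> 0 \<and> k' = 0)" using kk by arith
      thus ?thesis unfolding asg_def using True P_notin_Ls[OF ltX[OF Y]] by auto
    next
      case False
      have g: "kap p a X \<noteq> kap p a Y" "kap p a Y \<noteq> kap p a X" using good[OF XY False] by auto
      show ?thesis
      proof (cases "k = 0")
        case k0: True
        show ?thesis
        proof (cases "k' = 0")
          case True thus ?thesis unfolding asg_def using k0 False by auto
        next
          case k'0: False
          thus ?thesis unfolding asg_def using k0 notin_Ls[OF ltX[OF X] g(1)] by auto
        qed
      next
        case k0: False
        show ?thesis
        proof (cases "k' = 0")
          case True thus ?thesis unfolding asg_def using k0 notin_Ls[OF ltX[OF Y] g(2)] by auto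
        next
          case k'0: False
          thus ?thesis unfolding asg_def using k0 Ls_disj_par[OF g(1)] by auto
        qed
      qed
    qed
  qed
qed

end

context prm begin

lemma Ls_pt: "c \<in> Ls p s X \<Longrightarrow> c < p * p \<Longrightarrow> kap p s c = kap p s X \<and> c \<noteq> X"
  using mem_Ls[of c s X] rho_ge[of s X] by auto

lemma Ls_big: "c \<in> Ls p s X \<Longrightarrow> \<not> c < p * p \<Longrightarrow> c = rho p s X"
  using mem_Ls by auto

lemma Ls_disj_gen:
  assumes "\<And>c. c < p * p \<Longrightarrow> kap p s c = kap p s X \<Longrightarrow> c \<noteq> X \<Longrightarrow> kap p s' c = kap p s' Y \<Longrightarrow> c \<noteq> Y \<Longrightarrow> False"
    and "rho p s X \<noteq> rho p s' Y"
  shows "Ls p s X \<inter> Ls p s' Y = {}"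
proof -
  { fix c assume c: "c \<in> Ls p s X" "c \<in> Ls p s' Y"
    have False
    proof (cases "c < p * p")
      case True thus False using Ls_pt[OF c(1) True] Ls_pt[OF c(2) True] assms(1) by blast
    next
      case False thus False using Ls_big[OF c(1) False] Ls_big[OF c(2) False] assms(2) by simp
    qed }
  thus ?thesis by blast
qed

lemma rho_ne_slope: "s \<noteq> s' \<Longrightarrow> rho p s X \<noteq> rho p s' Y"
  using rho_inj by blast

lemma rho_ne_kap: "kap p s X \<noteq> kap p s Y \<Longrightarrow> rho p s X \<noteq> rho p s Y"
  using rho_inj by blast

lemma caseC:
  assumes len: "length xs = 5" and lt: "P < p * p" "Q < p * p" and PQ: "P \<noteq> Q"
    and sub: "set xs \<subseteq> {P, Q}" and cP: "cnt xs P \<le> 3" and cQ: "cnt xs Q \<le> 2"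
  shows "\<exists>Rs :: nat \<Rightarrow> nat set. (\<forall>j<5. Rs j \<subseteq> {..<p * p + 5 * p + 1}) \<and>
            (\<forall>j<5. \<forall>j'<5. j \<noteq> j' \<longrightarrow> Rs j \<inter> Rs j' = {}) \<and>
            (\<forall>j<5. recovers (p * p) EE (Rs j) (xs ! j))"
proof -
  define G where "G = {s. s < 5 \<and> kap p s P \<noteq> kap p s Q}"
  have GS: "G \<subseteq> {..<5}" using G_def by auto
  have finG: "finite G" using GS finite_subset by blast
  have "{..<5} - G = {s. s < 5 \<and> kap p s P = kap p s Q}" using G_def by auto
  hence "card ({..<5} - G) \<le> 1" using coll1[OF lt PQ] by simp
  moreover have "card ({..<5} - G) = 5 - card G" using card_Diff_subset[OF finG GS] by simp
  ultimately have c3: "3 \<le> card G" by linarith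
  have "\<exists>g. inj_on g {..<3::nat} \<and> g ` {..<3} \<subseteq> G" by (rule enum_subset[OF finG c3])
  then obtain g where ginj: "inj_on g {..<3::nat}" and gG: "g ` {..<3} \<subseteq> G" by blast
  define a where "a = g 0"
  define b where "b = g 1"
  define d where "d = g 2"
  have abd: "a \<noteq> b" "a \<noteq> d" "b \<noteq> d" using ginj unfolding a_def b_def d_def inj_on_def by fastforce+
  have gm: "a \<in> G" "b \<in> G" "d \<in> G" using gG unfolding a_def b_def d_def by (auto simp: image_subset_iff)
  have abd5: "a < 5" "b < 5" "d < 5" using gm G_def by auto
  have kPQ: "kap p a P \<noteq> kap p a Q" "kap p b P \<noteq> kap p b Q" "kap p d P \<noteq> kap p d Q"
    using gm G_def by auto
  obtain U where U: "U < p * p" "kap p a U = kap p a P" "kap p d U = kap p d Q"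
    using meet[OF abd(2) abd5(1,3)] by blast
  obtain V where V: "V < p * p" "kap p b V = kap p b P" "kap p d V = kap p d Q"
    using meet[OF abd(3) abd5(2,3)] by blast
  have inj: "\<And>s s' c c'. s \<noteq> s' \<Longrightarrow> s < 5 \<Longrightarrow> s' < 5 \<Longrightarrow> c < p * p \<Longrightarrow> c' < p * p \<Longrightarrow>
      kap p s c = kap p s c' \<Longrightarrow> kap p s' c = kap p s' c' \<Longrightarrow> c = c'"
    using kap_inj by blast
  have UP: "U \<noteq> P" using U kPQ by auto
  have VP: "V \<noteq> P" using V kPQ by auto
  have UQ: "U \<noteq> Q" using U kPQ by auto
  have VQ: "V \<noteq> Q" using V kPQ by auto
  have kbU: "kap p b U \<noteq> kap p b P"
  proof
    assume "kap p b U = kap p b P"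
    hence "U = P" using inj[OF abd(1) abd5(1,2) U(1) lt(1) U(2)] by simp
    thus False using UP by simp
  qed
  have kaV: "kap p a V \<noteq> kap p a P"
  proof
    assume "kap p a V = kap p a P"
    hence "V = P" using inj[OF abd(1) abd5(1,2) V(1) lt(1)] V(2) by simp
    thus False using VP by simp
  qed
  have UV: "U \<noteq> V" using kaV U(2) by auto
  have kbUQ: "kap p b Q \<noteq> kap p b U"
  proof
    assume "kap p b Q = kap p b U"
    hence "Q = U" using inj[OF abd(3) abd5(2,3) lt(2) U(1)] U(3) by simp
    thus False using UQ by simp
  qed
  have kaVQ: "kap p a Q \<noteq> kap p a V"
  proof
    assume "kap p a Q = kap p a V"
    hence "Q = V" using inj[OF abd(2) abd5(1,3) lt(2) V(1)] V(3) by simp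
    thus False using VQ by simp
  qed
  define W0 where "W0 = insert (rho p d Q) (line p d Q - insert Q {U, V})"
  define W where "W = W0 \<union> Ls p b U \<union> Ls p a V"
  have memW0: "\<And>c. c \<in> W0 \<longleftrightarrow> c = rho p d Q \<or> (c < p * p \<and> kap p d c = kap p d Q \<and> c \<noteq> Q \<and> c \<noteq> U \<and> c \<noteq> V)"
    unfolding W0_def line_def by auto
  have W0_big: "\<And>c. c \<in> W0 \<Longrightarrow> \<not> c < p * p \<Longrightarrow> c = rho p d Q" using memW0 by auto
  have UVline: "{U, V} \<subseteq> line p d Q - {Q}" using U V UQ VQ unfolding line_def by auto
  have recW: "recovers (p * p) EE W Q"
  proof (rule rec_from)
    show "\<forall>x\<in>words (p * p). x Q = (\<Sum>c\<in>W0. EE x c) + (\<Sum>k\<in>{U, V}. x k)"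
      using line_rep[OF lt(2) abd5(3) UVline] unfolding W0_def .
    show "W0 \<subseteq> W" unfolding W_def by blast
    show "\<forall>k\<in>{U, V}. recovers (p * p) EE W k"
      using rec_mono[OF rec_Ls[OF U(1) abd5(2)], of W] rec_mono[OF rec_Ls[OF V(1) abd5(1)], of W]
      unfolding W_def by blast
  qed
  have W0sub: "W0 \<subseteq> Ls p d Q" unfolding W0_def Ls_def by blast
  have Wlt: "W \<subseteq> {..<p * p + 5 * p + 1}"
    using W0sub Ls_lt[OF abd5(3), of Q] Ls_lt[OF abd5(2), of U] Ls_lt[OF abd5(1), of V] unfolding W_def by blast
  have PW: "P \<notin> W"
  proof -
    have "P \<notin> W0" using memW0[of P] kPQ(3) lt(1) rho_ge[of d Q] by auto
    moreover have "P \<notin> Ls p b U" using notin_Ls[OF lt(1)] kbU by metis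
    moreover have "P \<notin> Ls p a V" using notin_Ls[OF lt(1)] kaV by metis
    ultimately show ?thesis unfolding W_def by blast
  qed
  have QW: "Q \<notin> W"
  proof -
    have "Q \<notin> W0" using memW0[of Q] lt(2) rho_ge[of d Q] by auto
    moreover have "Q \<notin> Ls p b U" using notin_Ls[OF lt(2) kbUQ] .
    moreover have "Q \<notin> Ls p a V" using notin_Ls[OF lt(2) kaVQ] .
    ultimately show ?thesis unfolding W_def by blast
  qed
  have aPW: "Ls p a P \<inter> W = {}"
  proof -
    have "Ls p a P \<inter> W0 = {}"
    proof -
      { fix c assume c: "c \<in> Ls p a P" "c \<in> W0"
        have False
        proof (cases "c < p * p")
          case True
          hence "kap p a c = kap p a P" "kap p d c = kap p d Q" "c \<noteq> U" using Ls_pt[OF c(1)] memW0[of c] c(2) rho_ge[of d Q] by auto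
          thus False using inj[OF abd(2) abd5(1,3) True U(1)] U by simp
        next
          case False thus False using Ls_big[OF c(1) False] W0_big[OF c(2) False] rho_ne_slope[OF abd(2)] by metis
        qed }
      thus ?thesis by blast
    qed
    moreover have "Ls p a P \<inter> Ls p b U = {}"
    proof (rule Ls_disj_gen)
      fix c assume "c < p * p" "kap p a c = kap p a P" "c \<noteq> P" "kap p b c = kap p b U" "c \<noteq> U"
      thus False using inj[OF abd(1) abd5(1,2) _ U(1)] U(2) by simp
    qed (rule rho_ne_slope[OF abd(1)])
    moreover have "Ls p a P \<inter> Ls p a V = {}" using Ls_disj_par kaV by metis
    ultimately show ?thesis unfolding W_def by blast
  qed
  have bPW: "Ls p b P \<inter> W = {}"
  proof -
    have "Ls p b P \<inter> W0 = {}"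
    proof -
      { fix c assume c: "c \<in> Ls p b P" "c \<in> W0"
        have False
        proof (cases "c < p * p")
          case True
          hence "kap p b c = kap p b P" "kap p d c = kap p d Q" "c \<noteq> V" using Ls_pt[OF c(1)] memW0[of c] c(2) rho_ge[of d Q] by auto
          thus False using inj[OF abd(3) abd5(2,3) True V(1)] V by simp
        next
          case False thus False using Ls_big[OF c(1) False] W0_big[OF c(2) False] rho_ne_slope[OF abd(3)] by metis
        qed }
      thus ?thesis by blast
    qed
    moreover have "Ls p b P \<inter> Ls p b U = {}" using Ls_disj_par kbU by metis
    moreover have "Ls p b P \<inter> Ls p a V = {}"
    proof (rule Ls_disj_gen)
      fix c assume "c < p * p" "kap p b c = kap p b P" "c \<noteq> P" "kap p a c = kap p a V" "c \<noteq> V"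
      thus False using inj[OF abd(1) abd5(1,2) _ V(1)] V(2) by simp
    qed (rule rho_ne_slope[OF abd(1)[symmetric]])
    ultimately show ?thesis unfolding W_def by blast
  qed
  have abP: "Ls p a P \<inter> Ls p b P = {}" by (rule Ls_disj_slope[OF abd(1) abd5(1,2) lt(1)])
  have PaP: "P \<notin> Ls p a P" "P \<notin> Ls p b P" using P_notin_Ls[OF lt(1)] by auto
  have QaP: "Q \<notin> Ls p a P" "Q \<notin> Ls p b P" using notin_Ls[OF lt(2)] kPQ(1,2) by metis+
  define T where "T i = (if i = 0 then {P} else if i = 1 then Ls p a P else if i = 2 then Ls p b P
                          else if i = 3 then {Q} else W)" for i :: nat
  have Tdis: "\<And>i j. i < 5 \<Longrightarrow> j < 5 \<Longrightarrow> i < j \<Longrightarrow> T i \<inter> T j = {}"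
  proof -
    fix i j :: nat assume "i < 5" "j < 5" "i < j"
    hence "(i = 0 \<and> j = 1) \<or> (i = 0 \<and> j = 2) \<or> (i = 0 \<and> j = 3) \<or> (i = 0 \<and> j = 4) \<or>
           (i = 1 \<and> j = 2) \<or> (i = 1 \<and> j = 3) \<or> (i = 1 \<and> j = 4) \<or>
           (i = 2 \<and> j = 3) \<or> (i = 2 \<and> j = 4) \<or> (i = 3 \<and> j = 4)" by arith
    thus "T i \<inter> T j = {}" unfolding T_def using PW QW aPW bPW abP PaP QaP PQ by auto
  qed
  define asg where "asg X (k::nat) = T (if X = P then k else 3 + k)" for X k
  show ?thesis
  proof (rule assign_batch[OF len])
    have Xc: "\<And>X k. X \<in> set xs \<Longrightarrow> k < cnt xs X \<Longrightarrow> (X = P \<and> k < 3) \<or> (X = Q \<and> X \<noteq> P \<and> k < 2)"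
      using sub cP cQ PQ by fastforce
    show "\<forall>X\<in>set xs. \<forall>k<cnt xs X. asg X k \<subseteq> {..<p * p + 5 * p + 1}"
    proof (intro ballI allI impI)
      fix X k assume "X \<in> set xs" "k < cnt xs X"
      hence "(X = P \<and> k < 3) \<or> (X = Q \<and> X \<noteq> P \<and> k < 2)" by (rule Xc)
      hence "(X = P \<and> (k = 0 \<or> k = 1 \<or> k = 2)) \<or> (X = Q \<and> X \<noteq> P \<and> (k = 0 \<or> k = 1))" by arith
      thus "asg X k \<subseteq> {..<p * p + 5 * p + 1}"
        unfolding asg_def T_def using lt Ls_lt[OF abd5(1)] Ls_lt[OF abd5(2)] Wlt by auto
    qed
    show "\<forall>X\<in>set xs. \<forall>k<cnt xs X. recovers (p * p) EE (asg X k) X"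
    proof (intro ballI allI impI)
      fix X k assume "X \<in> set xs" "k < cnt xs X"
      hence "(X = P \<and> k < 3) \<or> (X = Q \<and> X \<noteq> P \<and> k < 2)" by (rule Xc)
      hence "(X = P \<and> (k = 0 \<or> k = 1 \<or> k = 2)) \<or> (X = Q \<and> X \<noteq> P \<and> (k = 0 \<or> k = 1))" by arith
      thus "recovers (p * p) EE (asg X k) X"
        unfolding asg_def T_def using lt rec_sing rec_Ls[OF lt(1) abd5(1)] rec_Ls[OF lt(1) abd5(2)] recW by auto
    qed
    fix X k Y k' assume X: "X \<in> set xs" and Y: "Y \<in> set xs" and k: "k < cnt xs X" and k': "k' < cnt xs Y"
      and ne: "(X, k) \<noteq> (Y, k')"
    have x: "(X = P \<and> k < 3) \<or> (X = Q \<and> X \<noteq> P \<and> k < 2)" by (rule Xc[OF X k])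
    have y: "(Y = P \<and> k' < 3) \<or> (Y = Q \<and> Y \<noteq> P \<and> k' < 2)" by (rule Xc[OF Y k'])
    define i where "i = (if X = P then k else 3 + k)"
    define j where "j = (if Y = P then k' else 3 + k')"
    have ij: "i < 5" "j < 5" "i \<noteq> j" using x y ne PQ unfolding i_def j_def by auto
    have "T i \<inter> T j = {}"
    proof (cases "i < j")
      case True thus ?thesis using Tdis ij by blast
    next
      case False hence "j < i" using ij by simp
      thus ?thesis using Tdis[of j i] ij by blast
    qed
    thus "asg X k \<inter> asg Y k' = {}" unfolding asg_def i_def j_def .
  qed
qed

lemma batch_all:
  assumes len: "length xs = 5" and pts: "set xs \<subseteq> {..<p * p}"
  shows "\<exists>Rs :: nat \<Rightarrow> nat set. (\<forall>j<5. Rs j \<subseteq> {..<p * p + 5 * p + 1}) \<and>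
            (\<forall>j<5. \<forall>j'<5. j \<noteq> j' \<longrightarrow> Rs j \<inter> Rs j' = {}) \<and>
            (\<forall>j<5. recovers (p * p) EE (Rs j) (xs ! j))"
proof (cases "\<exists>P<p * p. \<forall>Q\<in>set xs. Q \<noteq> P \<longrightarrow> cnt xs Q \<le> 1")
  case True
  then obtain P where "P < p * p" "\<forall>Q\<in>set xs. Q \<noteq> P \<longrightarrow> cnt xs Q \<le> 1" by blast
  thus ?thesis using caseA[OF len pts] by blast
next
  case False
  have x0: "xs ! 0 \<in> set xs" using len by simp
  hence "xs ! 0 < p * p" using pts by blast
  hence "\<not> (\<forall>Q\<in>set xs. Q \<noteq> xs ! 0 \<longrightarrow> cnt xs Q \<le> 1)" using False by blast
  then obtain P where P: "P \<in> set xs" "2 \<le> cnt xs P" by force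
  have Plt: "P < p * p" using P pts by blast
  hence "\<not> (\<forall>Q\<in>set xs. Q \<noteq> P \<longrightarrow> cnt xs Q \<le> 1)" using False by blast
  then obtain Q where Q: "Q \<in> set xs" "Q \<noteq> P" "2 \<le> cnt xs Q" by force
  have Qlt: "Q < p * p" using Q pts by blast
  define SP where "SP = {j. j < 5 \<and> xs ! j = P}"
  define SQ where "SQ = {j. j < 5 \<and> xs ! j = Q}"
  define SO where "SO = {j. j < 5 \<and> xs ! j \<noteq> P \<and> xs ! j \<noteq> Q}"
  have cPQ: "cnt xs P = card SP" "cnt xs Q = card SQ" unfolding cnt_def SP_def SQ_def len by simp_all
  have fin: "finite SP" "finite SQ" "finite SO" unfolding SP_def SQ_def SO_def by simp_all
  have "SP \<union> SQ \<union> SO = {..<5}" unfolding SP_def SQ_def SO_def by auto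
  moreover have "card (SP \<union> SQ \<union> SO) = card SP + card SQ + card SO"
  proof -
    have "card (SP \<union> SQ) = card SP + card SQ"
      by (rule card_Un_disjoint[OF fin(1,2)]) (use Q(2) SP_def SQ_def in auto)
    moreover have "card (SP \<union> SQ \<union> SO) = card (SP \<union> SQ) + card SO"
      by (rule card_Un_disjoint) (use fin SP_def SQ_def SO_def in auto)
    ultimately show ?thesis by simp
  qed
  ultimately have sum5: "card SP + card SQ + card SO = 5" by simp
  have inS: "\<And>X. X \<in> set xs \<Longrightarrow> \<exists>j<5. xs ! j = X" using len by (auto simp: in_set_conv_nth)
  have cases3: "(card SP = 2 \<and> card SQ = 2 \<and> card SO = 1) \<or> (card SP = 3 \<and> card SQ = 2 \<and> card SO = 0)
      \<or> (card SP = 2 \<and> card SQ = 3 \<and> card SO = 0)" using sum5 P(2) Q(3) cPQ by linarith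
  show ?thesis
  proof (cases "card SO = 0")
    case True
    hence SO0: "SO = {}" using fin(3) by simp
    have sub: "set xs \<subseteq> {P, Q}"
    proof
      fix X assume "X \<in> set xs"
      then obtain j where "j < 5" "xs ! j = X" using inS by blast
      thus "X \<in> {P, Q}" using SO0 SO_def by blast
    qed
    show ?thesis
    proof (cases "card SP = 3")
      case True
      hence "cnt xs P \<le> 3" "cnt xs Q \<le> 2" using cases3 cPQ by auto
      thus ?thesis using caseC[OF len Plt Qlt Q(2)[symmetric] sub] by blast
    next
      case False
      hence "cnt xs Q \<le> 3" "cnt xs P \<le> 2" using cases3 cPQ \<open>card SO = 0\<close> by auto
      moreover have "set xs \<subseteq> {Q, P}" using sub by blast
      ultimately show ?thesis using caseC[OF len Qlt Plt Q(2)] by blast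
    qed
  next
    case False
    hence c: "card SP = 2" "card SQ = 2" "card SO = 1" using cases3 by auto
    then obtain j5 where SO1: "SO = {j5}" using card_1_singletonE by blast
    define R where "R = xs ! j5"
    have j5: "j5 < 5" "R \<noteq> P" "R \<noteq> Q" using SO1 SO_def R_def by auto
    have Rlt: "R < p * p" using j5 len pts R_def by (metis nth_mem subsetD lessThan_iff)
    have sub: "set xs \<subseteq> {P, Q, R}"
    proof
      fix X assume "X \<in> set xs"
      then obtain j where j: "j < 5" "xs ! j = X" using inS by blast
      show "X \<in> {P, Q, R}"
      proof (cases "X = P \<or> X = Q")
        case True thus ?thesis by blast
      next
        case False
        hence "j \<in> SO" using j SO_def by blast
        hence "j = j5" using SO1 by blast
        thus ?thesis using j R_def by blast
      qed
    qed
    have cR: "cnt xs R \<le> 1"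
    proof -
      have "{j. j < length xs \<and> xs ! j = R} \<subseteq> SO" using SO_def len j5 by auto
      hence "cnt xs R \<le> card SO" unfolding cnt_def using card_mono[OF fin(3)] by blast
      thus ?thesis using c by simp
    qed
    have c2: "\<forall>X\<in>set xs. cnt xs X \<le> 2"
    proof
      fix X assume "X \<in> set xs"
      hence "X = P \<or> X = Q \<or> X = R" using sub by blast
      thus "cnt xs X \<le> 2" using cR c cPQ by auto
    qed
    show ?thesis using caseB[OF len Plt Qlt Rlt Q(2)[symmetric] j5(2)[symmetric] j5(3)[symmetric] sub c2] .
  qed
qed
end

theorem theorem13:
  shows "(\<forall>p::nat. prime p \<and> 5 \<le> p \<longrightarrow>
            (let n = p ^ 2; N = n + 5 * p + 1 in
               batch_code n N 5 (array_code_parity p p [0, 1, 2, 3, 4]) \<and>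
               N - n = 5 * p + 1)) \<and>
         (\<exists>c1 c2 :: real. 0 < c1 \<and> 0 < c2 \<and>
            (\<forall>p::nat. prime p \<and> 5 \<le> p \<longrightarrow>
               c1 * sqrt (real (p ^ 2)) \<le> real (r_B (p ^ 2) 5) \<and>
               real (r_B (p ^ 2) 5) \<le> c2 * sqrt (real (p ^ 2))))"
proof -
  have bc: "batch_code (p * p) (p * p + 5 * p + 1) 5 (array_code_parity p p [0, 1, 2, 3, 4])"
    if h: "prime p" "5 \<le> p" for p :: nat
  proof -
    interpret prm p using h by unfold_locales
    show ?thesis unfolding batch_code_def
    proof (intro conjI allI impI)
      show "linear_code (p * p) (p * p + 5 * p + 1) EE" by (rule E_linear)
      fix "is" :: "nat list" assume a: "length is = 5 \<and> set is \<subseteq> {..<p * p}"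
      show "\<exists>R :: nat \<Rightarrow> nat set. (\<forall>j<5. R j \<subseteq> {..<p * p + 5 * p + 1}) \<and>
            (\<forall>j<5. \<forall>j'<5. j \<noteq> j' \<longrightarrow> R j \<inter> R j' = {}) \<and>
            (\<forall>j<5. recovers (p * p) EE (R j) (is ! j))"
        using batch_all a by blast
    qed
  qed
  have part1: "\<forall>p::nat. prime p \<and> 5 \<le> p \<longrightarrow>
            (let n = p ^ 2; N = n + 5 * p + 1 in
               batch_code n N 5 (array_code_parity p p [0, 1, 2, 3, 4]) \<and>
               N - n = 5 * p + 1)"
    using bc by (simp add: Let_def power2_eq_square)
  have bnd: "p \<le> r_B (p ^ 2) 5 \<and> r_B (p ^ 2) 5 \<le> 5 * p + 1" if h: "prime p" "5 \<le> p" for p :: nat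
  proof -
    define Pr where "Pr = (\<lambda>r. \<exists>N E. p ^ 2 \<le> N \<and> N - p ^ 2 = r \<and> batch_code (p ^ 2) N 5 E)"
    have ex: "Pr (5 * p + 1)" unfolding Pr_def
      using bc[OF h] by (intro exI[of _ "p * p + 5 * p + 1"] exI[of _ "array_code_parity p p [0, 1, 2, 3, 4]"])
        (simp add: power2_eq_square)
    have rB: "r_B (p ^ 2) 5 = Least Pr" unfolding r_B_def Pr_def ..
    have up: "Least Pr \<le> 5 * p + 1" by (rule Least_le[of Pr, OF ex])
    have "Pr (Least Pr)" by (rule LeastI[of Pr, OF ex])
    then obtain N E where NE: "p ^ 2 \<le> N" "N - p ^ 2 = Least Pr" "batch_code (p ^ 2) N 5 E"
      unfolding Pr_def by blast
    have lc: "linear_code (p ^ 2) N E" using NE(3) unfolding batch_code_def by blast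
    have "p ^ 2 \<le> (N - p ^ 2) * (N - p ^ 2)" by (rule batch_lower[OF lc NE(3)])
    hence sq: "p * p \<le> Least Pr * Least Pr" using NE(2) by (simp add: power2_eq_square)
    have lo: "p \<le> Least Pr"
    proof (rule ccontr)
      assume "\<not> p \<le> Least Pr"
      hence l: "Least Pr < p" by simp
      hence "Least Pr * Least Pr < p * p" using mult_strict_mono[OF l l] by simp
      thus False using sq by simp
    qed
    show ?thesis using up lo rB by simp
  qed
  have part2: "\<exists>c1 c2 :: real. 0 < c1 \<and> 0 < c2 \<and>
            (\<forall>p::nat. prime p \<and> 5 \<le> p \<longrightarrow>
               c1 * sqrt (real (p ^ 2)) \<le> real (r_B (p ^ 2) 5) \<and>
               real (r_B (p ^ 2) 5) \<le> c2 * sqrt (real (p ^ 2)))"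
  proof -
    have "\<forall>p::nat. prime p \<and> 5 \<le> p \<longrightarrow>
               1 * sqrt (real (p ^ 2)) \<le> real (r_B (p ^ 2) 5) \<and>
               real (r_B (p ^ 2) 5) \<le> 6 * sqrt (real (p ^ 2))"
    proof (intro allI impI)
      fix p :: nat assume h: "prime p \<and> 5 \<le> p"
      have s: "sqrt (real (p ^ 2)) = real p" by simp
      have b: "p \<le> r_B (p ^ 2) 5" "r_B (p ^ 2) 5 \<le> 5 * p + 1" using bnd h by auto
      have c1: "1 * sqrt (real (p ^ 2)) \<le> real (r_B (p ^ 2) 5)" using b s by simp
      have "5 * p + 1 \<le> 6 * p" using h by simp
      hence "real (r_B (p ^ 2) 5) \<le> real (6 * p)" using b by linarith
      hence c2: "real (r_B (p ^ 2) 5) \<le> 6 * sqrt (real (p ^ 2))" using s by simp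
      show "1 * sqrt (real (p ^ 2)) \<le> real (r_B (p ^ 2) 5) \<and>
               real (r_B (p ^ 2) 5) \<le> 6 * sqrt (real (p ^ 2))" using c1 c2 by simp
    qed
    thus ?thesis by (intro exI[of _ "1::real"] exI[of _ "6::real"]) simp
  qed
  show ?thesis using part1 part2 by blast
qed

end
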